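(* Let $$X_\infty=\Big(\sum_{k\ge1}\varepsilon_k\prod_{j=1}^k\theta_j^\alpha\Big)^{1/\alpha}.$$ Then $X_\infty$ is finite almost surely and $X_\infty\overset{d}{=}\theta_0(\varepsilon_0+X_\infty^\alpha)^{1/\alpha}$, where $X_\infty,\theta_0,\varepsilon_0$ are independent, $\theta_0\overset{d}{=}\theta_1$, $\varepsilon_0\overset{d}{=}\varepsilon_1$. Moreover $0\le \mathbb E\theta_0^\alpha<1$ and $$\mathbb E X_\infty^\alpha=\frac{\mathbb E\theta_0^\alpha}{1-\mathbb E\theta_0^\alpha},$$ the distribution $\mu_*$ of $X_\infty$ is absolutely continuous with respect to $m(dx)=x\,dx$ with density $f_*$ that is strictly positive a.e. on $(0,\infty)$, and $\mu_*$ is the unique stationary distribution of the Markov chain $(X_n)_{n\ge0}$ defined by $X_n=\theta_n(\varepsilon_n+X_{n-1}^\alpha)^{1/\alpha}$, $n\ge1$.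
   Context: Fix $\alpha>0$ and a Borel function $h\colon(0,1)\to[0,\infty)$ with $\int_0^1 h(r)r\,dr=1$. $(\varepsilon_n)_{n\ge1}$ and $(\theta_n)_{n\ge1}$ are independent sequences of independent random variables, with $\varepsilon_n$ exponentially distributed with mean $1$ and $\theta_n$ identically distributed on $(0,1)$ with distribution function $H(r)=P(\theta_n\le r)=\int_0^r h(z)z\,dz$. In the chain $(X_n)$, $X_0$ is a positive random variable independent of all $\varepsilon_n,\theta_n$. *)

theory Defs
  imports "HOL-Probability.Probability"
begin

definition step_map :: "real \<Rightarrow> real \<times> real \<times> real \<Rightarrow> real" where
  "step_map \<alpha> = (\<lambda>(x, t, e). t * (e + x powr \<alpha>) powr (1 / \<alpha>))"

definition Exp1 :: "real measure" where
  "Exp1 = density lborel (\<lambda>x. ennreal (exponential_density 1 x))"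

text \<open>nu is a stationary distribution (on the state space (0,infinity)) of the chain
  X_n = theta_n (eps_n + X_{n-1}^alpha)^(1/alpha), where theta_n ~ Theta and eps_n ~ Exp(1):
  if X_{n-1} ~ nu is independent of theta_n, eps_n, then X_n ~ nu.\<close>
definition stationary_dist :: "real \<Rightarrow> real measure \<Rightarrow> real measure \<Rightarrow> bool" where
  "stationary_dist \<alpha> Theta \<nu> \<longleftrightarrow>
     prob_space \<nu> \<and> sets \<nu> = sets borel \<and> emeasure \<nu> {0<..} = 1 \<and>
     distr (\<nu> \<Otimes>\<^sub>M (Theta \<Otimes>\<^sub>M Exp1)) borel (step_map \<alpha>) = \<nu>"

text \<open>The k-th term (k = 1, 2, ...) of the series defining X_infinity, indexed from 0:
  term k = eps_{k+1} * prod_{j=1}^{k+1} theta_j^alpha.\<close>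
definition Xterm :: "real \<Rightarrow> (nat \<Rightarrow> 'a \<Rightarrow> real) \<Rightarrow> (nat \<Rightarrow> 'a \<Rightarrow> real) \<Rightarrow> 'a \<Rightarrow> nat \<Rightarrow> real" where
  "Xterm \<alpha> eps theta x k = eps (Suc k) x * (\<Prod>j\<in>{1..Suc k}. theta j x powr \<alpha>)"

definition Xinf :: "real \<Rightarrow> (nat \<Rightarrow> 'a \<Rightarrow> real) \<Rightarrow> (nat \<Rightarrow> 'a \<Rightarrow> real) \<Rightarrow> 'a \<Rightarrow> real" where
  "Xinf \<alpha> eps theta x = (\<Sum>k. Xterm \<alpha> eps theta x k) powr (1 / \<alpha>)"

end

theory Submission
  imports Defs
begin


lemma density_pos_set:
  fixes f :: "real \<Rightarrow> ennreal"
  assumes f[measurable]: "f \<in> borel_measurable borel" and A[measurable]: "A \<in> sets borel"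
    and pos: "\<And>x. x \<in> A \<Longrightarrow> 0 < f x" and L: "emeasure lborel A > 0"
  shows "0 < emeasure (density lborel f) A"
proof (rule ccontr)
  assume "\<not> 0 < emeasure (density lborel f) A"
  then have "(\<integral>\<^sup>+ x. f x * indicator A x \<partial>lborel) = 0"
    by (subst (asm) emeasure_density) (auto simp: zero_less_iff_neq_zero)
  then have "AE x in lborel. f x * indicator A x = 0"
    by (subst (asm) nn_integral_0_iff_AE) auto
  then have "AE x in lborel. x \<notin> A"
    by (rule eventually_mono) (use pos in \<open>fastforce simp: indicator_def split: if_splits\<close>)
  then have "emeasure lborel A = 0"
    by (subst (asm) AE_iff_measurable[of A]) auto
  with L show False by simp
qed

lemma Exp1_prob: "prob_space Exp1"
  unfolding Exp1_def using prob_space_exponential_density[of 1] by simp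

lemma sets_Exp1[simp, measurable_cong]: "sets Exp1 = sets borel"
  unfolding Exp1_def by simp

lemma space_Exp1[simp]: "space Exp1 = UNIV"
  unfolding Exp1_def by simp

lemma AE_Exp1_pos: "AE e in Exp1. 0 < e"
proof -
  have "AE e in lborel. e \<noteq> 0" by (rule AE_lborel_singleton)
  then show ?thesis unfolding Exp1_def
    by (subst AE_density) (auto elim!: eventually_mono simp: exponential_density_def)
qed

lemma Exp1_Icc_pos: assumes "0 < b" shows "0 < emeasure Exp1 {0..b}"
  unfolding Exp1_def using assms
  by (intro density_pos_set) (auto simp: exponential_density_def)


locale L = prob_space M for M :: "'a measure" +
  fixes \<alpha> :: real and h :: "real \<Rightarrow> real" and eps theta :: "nat \<Rightarrow> 'a \<Rightarrow> real"
  assumes alpha: "\<alpha> > 0"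
    and h_meas[measurable]: "h \<in> borel_measurable borel"
    and h_nonneg: "\<And>r. 0 < r \<Longrightarrow> r < 1 \<Longrightarrow> h r \<ge> 0"
    and h_norm: "(\<integral>\<^sup>+ r. ennreal (indicator {0<..<1} r * h r * r) \<partial>lborel) = 1"
    and indep: "indep_vars (\<lambda>_. borel)
                  (\<lambda>i. case i of Inl n \<Rightarrow> eps n | Inr n \<Rightarrow> theta n)
                  (Inl ` {1..} \<union> Inr ` {1..})"
    and eps_exp: "\<And>n. n \<ge> 1 \<Longrightarrow>
                    distributed M lborel (eps n) (\<lambda>x. ennreal (exponential_density 1 x))"
    and theta_range: "\<And>n. n \<ge> 1 \<Longrightarrow> AE x in M. 0 < theta n x \<and> theta n x < 1"
    and theta_cdf: "\<And>n r. n \<ge> 1 \<Longrightarrow> 0 < r \<Longrightarrow> r < 1 \<Longrightarrow>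
                    ennreal (measure M {x \<in> space M. theta n x \<le> r})
                      = (\<integral>\<^sup>+ z. ennreal (indicator {0<..r} z * h z * z) \<partial>lborel)"
begin

definition XX :: "nat + nat \<Rightarrow> 'a \<Rightarrow> real" where
  "XX i = (case i of Inl n \<Rightarrow> eps n | Inr n \<Rightarrow> theta n)"
definition II :: "(nat + nat) set" where "II = Inl ` {1..} \<union> Inr ` {1..}"
definition ThetaD :: "real measure" where
  "ThetaD = density lborel (\<lambda>t. ennreal (indicator {0<..<1} t * h t * t))"

lemma indep': "indep_vars (\<lambda>_. borel) XX II"
  using indep unfolding XX_def II_def by simp

lemma rv_XX[measurable]: "i \<in> II \<Longrightarrow> XX i \<in> borel_measurable M"
  using indep' unfolding indep_vars_def by auto

lemma eps_meas[measurable]: "1 \<le> n \<Longrightarrow> eps n \<in> borel_measurable M"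
  using rv_XX[of "Inl n"] by (simp add: XX_def II_def)
lemma theta_meas[measurable]: "1 \<le> n \<Longrightarrow> theta n \<in> borel_measurable M"
  using rv_XX[of "Inr n"] by (simp add: XX_def II_def)

lemma distr_eps: "1 \<le> n \<Longrightarrow> distr M borel (eps n) = Exp1"
proof -
  assume n: "1 \<le> n"
  have "distr M lborel (eps n) = Exp1"
    using distributed_distr_eq_density[OF eps_exp[OF n]] unfolding Exp1_def .
  moreover have "distr M borel (eps n) = distr M lborel (eps n)"
    by (rule distr_cong) auto
  ultimately show ?thesis by simp
qed

lemma AE_eps_pos: "1 \<le> n \<Longrightarrow> AE x in M. 0 < eps n x"
proof -
  assume n: "1 \<le> n"
  have "AE e in distr M borel (eps n). 0 < e" unfolding distr_eps[OF n] by (rule AE_Exp1_pos)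
  then show ?thesis using n by (subst (asm) AE_distr_iff) auto
qed

lemma ThetaD_prob: "prob_space ThetaD"
  unfolding ThetaD_def
  by (rule prob_spaceI) (simp add: emeasure_density h_norm[unfolded mult.assoc] mult.assoc)

lemma ThetaD_sets[simp, measurable_cong]: "sets ThetaD = sets borel"
  by (simp add: ThetaD_def)

lemma ThetaD_emeasure_le: "emeasure ThetaD {..x} =
   (\<integral>\<^sup>+ t. ennreal (indicator {0<..<1} t * h t * t * indicator {..x} t) \<partial>lborel)"
  unfolding ThetaD_def
  by (subst emeasure_density) (auto intro!: nn_integral_cong simp: indicator_def ennreal_mult'')

lemma distr_theta_D: assumes n: "1 \<le> n" shows "distr M borel (theta n) = ThetaD"
proof (rule cdf_unique)
  show "real_distribution (distr M borel (theta n))"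
    using n by (intro real_distribution_distr) auto
  show "real_distribution ThetaD"
    unfolding real_distribution_def real_distribution_axioms_def using ThetaD_prob by simp
  interpret T: prob_space ThetaD by (rule ThetaD_prob)
  have [measurable]: "theta n \<in> borel_measurable M" using n by simp
  have AEr: "AE x in M. 0 < theta n x \<and> theta n x < 1" by (rule theta_range[OF n])
  have "emeasure (distr M borel (theta n)) {..x} = emeasure ThetaD {..x}" for x
  proof -
    have e1: "emeasure (distr M borel (theta n)) {..x} = emeasure M {\<omega>\<in>space M. theta n \<omega> \<le> x}"
      using n by (subst emeasure_distr) (auto intro!: arg_cong[where f="emeasure M"])
    consider "x \<le> 0" | "0 < x" "x < 1" | "1 \<le> x" by linarith
    then show ?thesis
    proof cases
      case 1
      have "emeasure M {\<omega>\<in>space M. theta n \<omega> \<le> x} = 0"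
        using AEr 1 by (subst AE_iff_measurable[symmetric, where P="\<lambda>\<omega>. \<not> theta n \<omega> \<le> x"])
           (auto intro: n elim!: eventually_mono)
      moreover have "emeasure ThetaD {..x} = 0"
        unfolding ThetaD_emeasure_le using 1
        by (subst nn_integral_cong[where v="\<lambda>_. 0"]) (auto simp: indicator_def)
      ultimately show ?thesis using e1 by simp
    next
      case 2
      have "emeasure M {\<omega>\<in>space M. theta n \<omega> \<le> x} = ennreal (measure M {\<omega>\<in>space M. theta n \<omega> \<le> x})"
        by (simp add: emeasure_eq_measure)
      also have "\<dots> = (\<integral>\<^sup>+ z. ennreal (indicator {0<..x} z * h z * z) \<partial>lborel)"
        using theta_cdf[OF n 2] .
      also have "\<dots> = emeasure ThetaD {..x}"
        unfolding ThetaD_emeasure_le using 2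
        by (intro nn_integral_cong) (auto simp: indicator_def)
      finally show ?thesis using e1 by simp
    next
      case 3
      have "emeasure M {\<omega>\<in>space M. theta n \<omega> \<le> x} = 1"
      proof -
        have "AE \<omega> in M. theta n \<omega> \<le> x" using AEr by eventually_elim (use 3 in auto)
        then show ?thesis by (subst emeasure_eq_1_AE) auto
      qed
      moreover have "emeasure ThetaD {..x} = 1"
      proof -
        have "emeasure ThetaD {..x} = emeasure ThetaD (space ThetaD)"
          unfolding ThetaD_emeasure_le using 3
          by (simp add: ThetaD_def emeasure_density) (intro nn_integral_cong, auto simp: indicator_def)
        then show ?thesis by (simp add: T.emeasure_space_1)
      qed
      ultimately show ?thesis using e1 by simp
    qed
  qed
  then show "cdf (distr M borel (theta n)) = cdf ThetaD"
    by (auto simp: cdf_def measure_def)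
qed

end

context L begin

definition m :: real where "m = (\<integral>\<omega>. theta 1 \<omega> powr \<alpha> \<partial>M)"

lemma int_theta_pow: assumes n: "1 \<le> n"
  shows "integrable M (\<lambda>\<omega>. theta n \<omega> powr \<alpha>)" "(\<integral>\<omega>. theta n \<omega> powr \<alpha> \<partial>M) = m"
proof -
  have [measurable]: "theta n \<in> borel_measurable M" using n by simp
  have AE1: "AE \<omega> in M. norm (theta n \<omega> powr \<alpha>) \<le> 1"
    using theta_range[OF n] by eventually_elim (use alpha in \<open>auto intro!: powr_le1\<close>)
  show "integrable M (\<lambda>\<omega>. theta n \<omega> powr \<alpha>)"
    by (rule integrable_const_bound[OF AE1]) simp
  have "(\<integral>\<omega>. theta n \<omega> powr \<alpha> \<partial>M) = (\<integral>t. t powr \<alpha> \<partial>distr M borel (theta n))"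
    by (subst integral_distr) auto
  also have "\<dots> = (\<integral>t. t powr \<alpha> \<partial>distr M borel (theta 1))"
    using distr_theta_D[OF n] distr_theta_D[of 1] by simp
  also have "\<dots> = m" unfolding m_def by (subst integral_distr) auto
  finally show "(\<integral>\<omega>. theta n \<omega> powr \<alpha> \<partial>M) = m" .
qed

lemma m_nonneg: "0 \<le> m"
  unfolding m_def by (rule integral_nonneg_AE) auto

lemma m_less1: "m < 1"
proof -
  have "(\<integral>\<omega>. theta 1 \<omega> powr \<alpha> \<partial>M) < (\<integral>\<omega>. 1 \<partial>M)"
  proof (rule integral_less_AE_space)
    show "integrable M (\<lambda>\<omega>. theta 1 \<omega> powr \<alpha>)" using int_theta_pow[of 1] by simp
    show "AE \<omega> in M. theta 1 \<omega> powr \<alpha> < 1"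
    proof -
      have "AE \<omega> in M. 0 < theta 1 \<omega> \<and> theta 1 \<omega> < 1" by (rule theta_range) simp
      then show ?thesis by (rule eventually_mono) (use alpha in \<open>auto simp: powr01_less_one\<close>)
    qed
  qed (auto simp: emeasure_space_1)
  then show ?thesis unfolding m_def by (simp add: prob_space)
qed

lemma nn_eps: assumes n: "1 \<le> n" shows "(\<integral>\<^sup>+\<omega>. ennreal (eps n \<omega>) \<partial>M) = 1"
proof -
  have hb: "has_bochner_integral M (\<lambda>x. eps n x ^ 1) (fact (0 + 1) / (fact 0 * 1 ^ 1))"
    by (rule has_bochner_integral_erlang_ith_moment[of 1]) (use eps_exp[OF n] in auto)
  then have "integrable M (eps n)" "(\<integral>x. eps n x \<partial>M) = 1"
    by (auto simp: has_bochner_integral_iff)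
  then show ?thesis using AE_eps_pos[OF n]
    by (subst nn_integral_eq_integral) (auto elim!: eventually_mono)
qed

lemma nn_theta: assumes n: "1 \<le> n" shows "(\<integral>\<^sup>+\<omega>. ennreal (theta n \<omega> powr \<alpha>) \<partial>M) = ennreal m"
  using int_theta_pow[OF n] by (subst nn_integral_eq_integral) auto

abbreviation XT where "XT \<equiv> Xterm \<alpha> eps theta"

definition YY :: "nat + nat \<Rightarrow> 'a \<Rightarrow> real" where
  "YY i \<omega> = (case i of Inl n \<Rightarrow> max 0 (eps n \<omega>) | Inr n \<Rightarrow> theta n \<omega> powr \<alpha>)"

lemma indep_YY: "indep_vars (\<lambda>_. borel) YY II"
proof -
  have "indep_vars (\<lambda>_. borel) (\<lambda>i x. (case i of Inl n \<Rightarrow> (\<lambda>y. max 0 y) | Inr n \<Rightarrow> (\<lambda>y. y powr \<alpha>)) (XX i x)) II"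
    by (rule indep_vars_compose2[OF indep']) (auto split: sum.split)
  then show ?thesis
    by (rule indep_vars_cong[THEN iffD1, rotated 3]) (auto simp: YY_def XX_def fun_eq_iff split: sum.split)
qed

lemma nn_XT: "(\<integral>\<^sup>+\<omega>. ennreal (XT \<omega> k) \<partial>M) = ennreal (m ^ Suc k)"
proof -
  define J where "J = insert (Inl (Suc k)) (Inr ` {1..Suc k})"
  have J: "finite J" "J \<subseteq> II" by (auto simp: J_def II_def)
  have eqp: "(\<Prod>i\<in>J. YY i \<omega>) = max 0 (eps (Suc k) \<omega>) * (\<Prod>j\<in>{1..Suc k}. theta j \<omega> powr \<alpha>)" for \<omega>
    unfolding J_def by (subst prod.insert) (auto simp: prod.reindex YY_def)
  have "AE \<omega> in M. XT \<omega> k = (\<Prod>i\<in>J. YY i \<omega>)"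
    using AE_eps_pos[of "Suc k", simplified] by eventually_elim (auto simp: eqp Xterm_def)
  then have "(\<integral>\<^sup>+\<omega>. ennreal (XT \<omega> k) \<partial>M) = (\<integral>\<^sup>+\<omega>. ennreal (\<Prod>i\<in>J. YY i \<omega>) \<partial>M)"
    by (intro nn_integral_cong_AE) auto
  also have "\<dots> = (\<integral>\<^sup>+\<omega>. (\<Prod>i\<in>J. ennreal (YY i \<omega>)) \<partial>M)"
    by (intro nn_integral_cong) (auto simp: YY_def prod_ennreal prod_nonneg split: sum.split)
  also have "\<dots> = (\<Prod>i\<in>J. \<integral>\<^sup>+\<omega>. ennreal (YY i \<omega>) \<partial>M)"
    by (rule indep_vars_nn_integral[OF J(1) indep_vars_compose2[OF indep_vars_subset[OF indep_YY J(2)]]])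
       auto
  also have "\<dots> = (\<integral>\<^sup>+\<omega>. ennreal (max 0 (eps (Suc k) \<omega>)) \<partial>M) * (\<Prod>j\<in>{1..Suc k}. \<integral>\<^sup>+\<omega>. ennreal (theta j \<omega> powr \<alpha>) \<partial>M)"
    unfolding J_def by (subst prod.insert) (auto simp: prod.reindex YY_def)
  also have "\<dots> = ennreal (m ^ Suc k)"
  proof -
    have "(\<integral>\<^sup>+\<omega>. ennreal (max 0 (eps (Suc k) \<omega>)) \<partial>M) = 1"
      using nn_eps[of "Suc k"] by (simp add: ennreal_max_0)
    moreover have "(\<Prod>j\<in>{1..Suc k}. \<integral>\<^sup>+\<omega>. ennreal (theta j \<omega> powr \<alpha>) \<partial>M) = (\<Prod>j\<in>{1..Suc k}. ennreal m)"
      by (intro prod.cong) (auto simp: nn_theta)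
    moreover have "(\<Prod>j\<in>{1..Suc k}. ennreal m) = ennreal (m ^ Suc k)"
      by (simp only: prod_constant card_atLeastAtMost diff_Suc_1 ennreal_power[OF m_nonneg])
    ultimately show ?thesis by simp
  qed
  finally show ?thesis .
qed

end

context L begin

lemma XT_meas[measurable]: "(\<lambda>\<omega>. XT \<omega> k) \<in> borel_measurable M"
  unfolding Xterm_def
  by (intro borel_measurable_times borel_measurable_prod) (auto intro!: measurable_compose[OF theta_meas] eps_meas)

lemma Xinf_meas[measurable]: "Xinf \<alpha> eps theta \<in> borel_measurable M"
  unfolding Xinf_def by measurable

lemma AE_XT_nonneg: "AE \<omega> in M. \<forall>k. 0 \<le> XT \<omega> k"
  unfolding AE_all_countable
proof
  fix k show "AE \<omega> in M. 0 \<le> XT \<omega> k"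
    using AE_eps_pos[of "Suc k", simplified]
    by (rule eventually_mono) (auto simp: Xterm_def simp del: prod.cl_ivl_Suc intro!: prod_nonneg mult_nonneg_nonneg)
qed

definition SS :: "'a \<Rightarrow> real" where "SS \<omega> = (\<Sum>k. XT \<omega> k)"

lemma SS_meas[measurable]: "SS \<in> borel_measurable M"
  unfolding SS_def by measurable

lemma geo_m: "(\<lambda>k. m ^ Suc k) sums (m / (1 - m))"
proof -
  have "(\<lambda>k. m * m ^ k) sums (m * (1 / (1 - m)))"
    by (intro sums_mult geometric_sums) (use m_nonneg m_less1 in auto)
  then show ?thesis by simp
qed

lemma nn_sum_XT: "(\<integral>\<^sup>+\<omega>. (\<Sum>k. ennreal (XT \<omega> k)) \<partial>M) = ennreal (m / (1 - m))"
proof -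
  have "(\<integral>\<^sup>+\<omega>. (\<Sum>k. ennreal (XT \<omega> k)) \<partial>M) = (\<Sum>k. \<integral>\<^sup>+\<omega>. ennreal (XT \<omega> k) \<partial>M)"
    by (rule nn_integral_suminf) auto
  also have "\<dots> = (\<Sum>k. ennreal (m ^ Suc k))" by (simp add: nn_XT)
  also have "\<dots> = ennreal (m / (1 - m))"
    by (rule suminf_ennreal_eq[OF _ geo_m]) (use m_nonneg in auto)
  finally show ?thesis .
qed

lemma AE_summable: "AE \<omega> in M. summable (XT \<omega>)"
proof -
  have "AE \<omega> in M. (\<Sum>k. ennreal (XT \<omega> k)) \<noteq> \<infinity>"
    by (rule nn_integral_PInf_AE) (auto simp: nn_sum_XT)
  then show ?thesis using AE_XT_nonneg
    by eventually_elim (auto intro: summable_suminf_not_top)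
qed

lemma AE_ennreal_SS: "AE \<omega> in M. ennreal (SS \<omega>) = (\<Sum>k. ennreal (XT \<omega> k))"
  using AE_summable AE_XT_nonneg by eventually_elim (simp add: SS_def suminf_ennreal2)

lemma AE_SS_nonneg: "AE \<omega> in M. 0 \<le> SS \<omega>"
  using AE_summable AE_XT_nonneg by eventually_elim (simp add: SS_def suminf_nonneg)

lemma Xinf_SS: "Xinf \<alpha> eps theta \<omega> = SS \<omega> powr (1 / \<alpha>)"
  unfolding Xinf_def SS_def ..

lemma powr_inv_powr: "0 \<le> s \<Longrightarrow> (s powr (1 / \<alpha>)) powr \<alpha> = s"
  using alpha by (cases "s = 0") (auto simp: powr_powr)

lemma AE_Xinf_pow: "AE \<omega> in M. Xinf \<alpha> eps theta \<omega> powr \<alpha> = SS \<omega>"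
  using AE_SS_nonneg by eventually_elim (simp add: Xinf_SS powr_inv_powr)

lemma nn_Xinf_pow: "(\<integral>\<^sup>+\<omega>. ennreal (Xinf \<alpha> eps theta \<omega> powr \<alpha>) \<partial>M) = ennreal (m / (1 - m))"
proof -
  have "(\<integral>\<^sup>+\<omega>. ennreal (Xinf \<alpha> eps theta \<omega> powr \<alpha>) \<partial>M) = (\<integral>\<^sup>+\<omega>. (\<Sum>k. ennreal (XT \<omega> k)) \<partial>M)"
  proof (intro nn_integral_cong_AE)
    show "AE \<omega> in M. ennreal (Xinf \<alpha> eps theta \<omega> powr \<alpha>) = (\<Sum>k. ennreal (XT \<omega> k))"
      using AE_Xinf_pow AE_ennreal_SS by eventually_elim simp
  qed
  then show ?thesis by (simp add: nn_sum_XT)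
qed

lemma int_Xinf_pow: "integrable M (\<lambda>\<omega>. Xinf \<alpha> eps theta \<omega> powr \<alpha>)"
  by (rule integrableI_nn_integral_finite[OF _ _ nn_Xinf_pow]) auto

lemma integral_Xinf_pow: "(\<integral>\<omega>. Xinf \<alpha> eps theta \<omega> powr \<alpha> \<partial>M) = m / (1 - m)"
  using m_nonneg m_less1 by (subst integral_eq_nn_integral) (auto simp: nn_Xinf_pow)

end


lemma prod_shift1: "(\<Prod>j\<in>{1..Suc n}. f j) = (f 1 :: real) * (\<Prod>j\<in>{1..n}. f (Suc j))"
proof (induction n)
  case 0 then show ?case by simp
next
  case (Suc n)
  have "(\<Prod>j\<in>{1..Suc (Suc n)}. f j) = (\<Prod>j\<in>{1..Suc n}. f j) * f (Suc (Suc n))"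
    by simp
  also have "\<dots> = f 1 * ((\<Prod>j\<in>{1..n}. f (Suc j)) * f (Suc (Suc n)))" using Suc by simp
  also have "(\<Prod>j\<in>{1..n}. f (Suc j)) * f (Suc (Suc n)) = (\<Prod>j\<in>{1..Suc n}. f (Suc j))"
    by simp
  finally show ?case .
qed

lemma Xterm_cong:
  assumes "\<And>n. 1 \<le> n \<Longrightarrow> e1 n x = e2 n y" "\<And>n. 1 \<le> n \<Longrightarrow> t1 n x = t2 n y"
  shows "Xterm a e1 t1 x = Xterm a e2 t2 y"
  unfolding Xterm_def fun_eq_iff using assms by (auto intro!: prod.cong)

lemma Xinf_cong:
  assumes "\<And>n. 1 \<le> n \<Longrightarrow> e1 n x = e2 n y" "\<And>n. 1 \<le> n \<Longrightarrow> t1 n x = t2 n y"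
  shows "Xinf a e1 t1 x = Xinf a e2 t2 y"
  unfolding Xinf_def using Xterm_cong[of e1 x e2 y t1 t2 a, OF assms] by simp

lemma Xterm_Suc: "Xterm a e t x (Suc k) = t 1 x powr a * Xterm a (\<lambda>n. e (Suc n)) (\<lambda>n. t (Suc n)) x k"
  unfolding Xterm_def by (subst prod_shift1[where n="Suc k"]) simp

lemma Xterm_0: "Xterm a e t x 0 = e 1 x * t 1 x powr a"
  unfolding Xterm_def by simp

context L begin

abbreviation "eps' \<equiv> (\<lambda>n. eps (Suc n))"
abbreviation "theta' \<equiv> (\<lambda>n. theta (Suc n))"
abbreviation "X' \<equiv> Xinf \<alpha> eps' theta'"

lemma AE_step: "AE \<omega> in M. Xinf \<alpha> eps theta \<omega> = step_map \<alpha> (X' \<omega>, theta 1 \<omega>, eps 1 \<omega>)"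
proof -
  have t1: "AE \<omega> in M. 0 < theta 1 \<omega> \<and> theta 1 \<omega> < 1" by (rule theta_range) simp
  have e1: "AE \<omega> in M. 0 < eps 1 \<omega>" by (rule AE_eps_pos) simp
  show ?thesis using t1 e1 AE_summable AE_XT_nonneg
  proof eventually_elim
    case (elim \<omega>)
    define c where "c = theta 1 \<omega> powr \<alpha>"
    have c: "0 < c" using elim by (simp add: c_def)
    define f where "f = Xterm \<alpha> eps' theta' \<omega>"
    have XS: "XT \<omega> (Suc k) = c * f k" for k unfolding c_def f_def by (rule Xterm_Suc)
    have sf: "summable (\<lambda>k. c * f k)"
      using elim(3) unfolding XS[symmetric] by (subst summable_Suc_iff)
    then have sf': "summable f" using c by (simp add: summable_cmult_iff)
    have f0: "0 \<le> f k" for k using spec[OF elim(4), of "Suc k"] XS[of k] c by (simp add: zero_le_mult_iff)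
    have S0: "0 \<le> suminf f" using sf' f0 by (simp add: suminf_nonneg)
    have "SS \<omega> = XT \<omega> 0 + (\<Sum>k. XT \<omega> (Suc k))"
      unfolding SS_def using suminf_split_head[OF elim(3)] by simp
    also have "\<dots> = c * (eps 1 \<omega> + suminf f)"
      using sf' by (simp add: XS Xterm_0 suminf_mult distrib_left) (simp add: c_def mult.commute)
    finally have SSe: "SS \<omega> = c * (eps 1 \<omega> + suminf f)" .
    have "Xinf \<alpha> eps theta \<omega> = c powr (1 / \<alpha>) * (eps 1 \<omega> + suminf f) powr (1 / \<alpha>)"
      unfolding Xinf_SS SSe using c S0 elim by (subst powr_mult) auto
    also have "c powr (1 / \<alpha>) = theta 1 \<omega>"
      unfolding c_def using elim alpha by (simp add: powr_powr)
    also have "suminf f = X' \<omega> powr \<alpha>"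
      unfolding Xinf_def f_def[symmetric] using S0 by (simp add: powr_inv_powr)
    finally show ?case by (simp add: step_map_def)
  qed
qed

end

context L begin

definition Z :: "'a \<Rightarrow> nat + nat \<Rightarrow> real" where "Z \<omega> = (\<lambda>i\<in>II. XX i \<omega>)"
definition sh :: "nat + nat \<Rightarrow> nat + nat" where "sh = map_sum Suc Suc"
definition DD :: "nat + nat \<Rightarrow> real measure" where
  "DD i = (case i of Inl _ \<Rightarrow> Exp1 | Inr _ \<Rightarrow> ThetaD)"
definition G :: "(nat + nat \<Rightarrow> real) \<Rightarrow> real" where
  "G z = Xinf \<alpha> (\<lambda>n z. z (Inl n)) (\<lambda>n z. z (Inr n)) z"
definition RS :: "(nat + nat \<Rightarrow> real) \<Rightarrow> nat + nat \<Rightarrow> real" where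
  "RS z = (\<lambda>i\<in>II. z (sh i))"

abbreviation "PB \<equiv> PiM II (\<lambda>_. borel :: real measure)"

lemma DD_sh[simp]: "DD (sh i) = DD i"
  by (cases i) (auto simp: DD_def sh_def)

lemma sets_DD[simp, measurable_cong]: "sets (DD i) = sets borel"
  by (cases i) (auto simp: DD_def)

lemma prob_DD: "prob_space (DD i)"
  by (cases i) (auto simp: DD_def Exp1_prob ThetaD_prob)

lemma sets_PiDD: "sets (PiM II DD) = sets PB"
  by (rule sets_PiM_cong) auto

lemma distr_XX: "i \<in> II \<Longrightarrow> distr M borel (XX i) = DD i"
  by (auto simp: II_def XX_def DD_def distr_eps distr_theta_D)

lemma Z_meas[measurable]: "Z \<in> measurable M PB"
  unfolding Z_def by (intro measurable_restrict) auto

lemma distr_Z: "distr M (PiM II DD) Z = PiM II DD"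
proof -
  have "II \<noteq> {}" by (auto simp: II_def)
  have "distr M PB Z = PiM II (\<lambda>i. distr M borel (XX i))"
    using indep_vars_iff_distr_eq_PiM'[where I=II and M'="\<lambda>_. borel" and X=XX] indep' \<open>II \<noteq> {}\<close>
    unfolding Z_def by auto
  also have "\<dots> = PiM II DD" by (rule PiM_cong) (auto simp: distr_XX)
  finally show ?thesis
    by (subst distr_cong[OF refl sets_PiDD[symmetric], of _ _ Z, symmetric]) auto
qed

lemma G_meas[measurable]: "G \<in> borel_measurable PB"
proof -
  have t: "(\<lambda>z. Xterm \<alpha> (\<lambda>n z. z (Inl n)) (\<lambda>n z. z (Inr n)) z k) \<in> borel_measurable PB" for k
    unfolding Xterm_def
  proof (intro borel_measurable_times borel_measurable_prod)
    show "(\<lambda>z. z (Inl (Suc k))) \<in> borel_measurable PB"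
      by (rule measurable_component_singleton) (auto simp: II_def)
    fix j assume "j \<in> {1..Suc k}"
    then have "Inr j \<in> II" by (auto simp: II_def)
    then show "(\<lambda>z. z (Inr j) powr \<alpha>) \<in> borel_measurable PB"
      by measurable
  qed
  have [measurable]: "(\<lambda>z. \<Sum>k. Xterm \<alpha> (\<lambda>n z. z (Inl n)) (\<lambda>n z. z (Inr n)) z k) \<in> borel_measurable PB"
    by (rule borel_measurable_suminf[OF t])
  show ?thesis unfolding G_def Xinf_def by measurable
qed

lemma RS_meas[measurable]: "RS \<in> measurable PB PB"
  unfolding RS_def
  by (intro measurable_restrict measurable_component_singleton) (auto simp: II_def sh_def)

lemma Xinf_G: "Xinf \<alpha> eps theta \<omega> = G (Z \<omega>)"
  unfolding G_def by (rule Xinf_cong) (auto simp: Z_def II_def XX_def)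

lemma X'_G: "X' \<omega> = G (RS (Z \<omega>))"
  unfolding G_def by (rule Xinf_cong) (auto simp: RS_def Z_def II_def XX_def sh_def)

lemma distr_RS: "distr (PiM II DD) (PiM II DD) RS = PiM II DD"
proof -
  have "distr (PiM II DD) (PiM II (\<lambda>i. DD (sh i))) (\<lambda>\<omega>. \<lambda>n\<in>II. \<omega> (sh n)) = PiM II (\<lambda>i. DD (sh i))"
    by (rule distr_PiM_reindex) (auto simp: prob_DD inj_on_def sh_def II_def map_sum_def split: sum.splits)
  moreover have "RS = (\<lambda>\<omega>. \<lambda>n\<in>II. \<omega> (sh n))" by (simp add: fun_eq_iff RS_def)
  ultimately show ?thesis by simp
qed

lemma distr_X': "distr M borel X' = distr M borel (Xinf \<alpha> eps theta)"
proof -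
  have mZ: "Z \<in> measurable M (PiM II DD)" using measurable_cong_sets[OF refl sets_PiDD] by simp
  have mG: "G \<in> borel_measurable (PiM II DD)" using measurable_cong_sets[OF sets_PiDD refl] by simp
  have mRS: "RS \<in> measurable (PiM II DD) (PiM II DD)"
    using measurable_cong_sets[OF sets_PiDD sets_PiDD] by simp
  have "X' = (\<lambda>\<omega>. G (RS (Z \<omega>)))" by (simp add: fun_eq_iff X'_G)
  then have "distr M borel X' = distr M borel (\<lambda>\<omega>. G (RS (Z \<omega>)))" by simp
  also have "\<dots> = distr (distr M (PiM II DD) Z) borel (\<lambda>z. G (RS z))"
    by (subst distr_distr) (use mZ mG mRS in \<open>auto simp: comp_def\<close>)
  also have "\<dots> = distr (distr (distr M (PiM II DD) Z) (PiM II DD) RS) borel G"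
    by (subst distr_distr) (use mZ mG mRS in \<open>auto simp: comp_def\<close>)
  also have "\<dots> = distr (distr M (PiM II DD) Z) borel G"
    unfolding distr_Z distr_RS ..
  also have "\<dots> = distr M borel (\<lambda>\<omega>. G (Z \<omega>))"
    by (subst distr_distr) (use mZ mG in \<open>auto simp: comp_def\<close>)
  also have "(\<lambda>\<omega>. G (Z \<omega>)) = Xinf \<alpha> eps theta" by (simp add: fun_eq_iff Xinf_G)
  finally show ?thesis .
qed

end


lemma step_map_eq: "step_map a = (\<lambda>p. fst (snd p) * (snd (snd p) + fst p powr a) powr (1 / a))"
  by (auto simp: step_map_def fun_eq_iff)

lemma step_map_meas[measurable]: "step_map a \<in> borel_measurable (M1 \<Otimes>\<^sub>M (M2 \<Otimes>\<^sub>M M3))"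
  if "sets M1 = sets borel" "sets M2 = sets borel" "sets M3 = sets borel" for M1 M2 M3 :: "real measure"
  unfolding step_map_eq using that by measurable

context L begin

lemma X'_meas[measurable]: "X' \<in> borel_measurable M"
proof -
  have "X' = (\<lambda>\<omega>. G (RS (Z \<omega>)))" by (simp add: fun_eq_iff X'_G)
  then show ?thesis by simp
qed

lemma distr_X'_te: "distr M (borel \<Otimes>\<^sub>M (borel \<Otimes>\<^sub>M borel)) (\<lambda>\<omega>. (X' \<omega>, theta 1 \<omega>, eps 1 \<omega>))
   = distr M borel X' \<Otimes>\<^sub>M distr M (borel \<Otimes>\<^sub>M borel) (\<lambda>\<omega>. (theta 1 \<omega>, eps 1 \<omega>))"
proof -
  define A where "A = {Inl (1::nat), Inr (1::nat)}"
  define B where "B = sh ` II"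
  have AB: "B \<inter> A = {}" "B \<subseteq> II" "A \<subseteq> II"
    by (auto simp: A_def B_def II_def sh_def)
  let ?rA = "\<lambda>\<omega>. restrict (\<lambda>i. XX i \<omega>) A"
  let ?rB = "\<lambda>\<omega>. restrict (\<lambda>i. XX i \<omega>) B"
  let ?PA = "PiM A (\<lambda>_. borel :: real measure)"
  let ?PB = "PiM B (\<lambda>_. borel :: real measure)"
  have ind: "indep_var ?PB ?rB ?PA ?rA"
    by (rule indep_var_restrict[OF indep' AB])
  have mA: "?rA \<in> measurable M ?PA" and mB: "?rB \<in> measurable M ?PB"
    using AB by (auto intro!: measurable_restrict)
  define G' where "G' z = G (\<lambda>i\<in>II. z (sh i))" for z :: "nat + nat \<Rightarrow> real"
  define H where "H z = (z (Inr 1), z (Inl 1))" for z :: "nat + nat \<Rightarrow> real"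
  have mG': "G' \<in> borel_measurable ?PB"
  proof -
    have "(\<lambda>z. \<lambda>i\<in>II. z (sh i)) \<in> measurable ?PB PB"
      by (intro measurable_restrict measurable_component_singleton) (auto simp: B_def)
    then show ?thesis unfolding G'_def by measurable
  qed
  have mH: "H \<in> measurable ?PA (borel \<Otimes>\<^sub>M borel)"
    unfolding H_def by (intro measurable_Pair measurable_component_singleton) (auto simp: A_def)
  have eX: "G' (?rB \<omega>) = X' \<omega>" for \<omega>
  proof -
    have sh: "i \<in> II \<Longrightarrow> sh i \<in> II" for i by (auto simp: II_def sh_def)
    have "(\<lambda>i\<in>II. restrict (\<lambda>i. XX i \<omega>) B (sh i)) = RS (Z \<omega>)"
      unfolding RS_def Z_def by (intro restrict_ext) (auto simp: B_def sh)
    then show ?thesis unfolding G'_def X'_G by simp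
  qed
  have eH: "H (?rA \<omega>) = (theta 1 \<omega>, eps 1 \<omega>)" for \<omega>
    by (auto simp: H_def A_def XX_def)
  interpret pA: prob_space "distr (distr M ?PA ?rA) (borel \<Otimes>\<^sub>M borel) H"
    using mA mH by (intro prob_space.prob_space_distr prob_space_distr) auto
  have "distr M (borel \<Otimes>\<^sub>M (borel \<Otimes>\<^sub>M borel)) (\<lambda>\<omega>. (X' \<omega>, theta 1 \<omega>, eps 1 \<omega>))
     = distr (distr M (?PB \<Otimes>\<^sub>M ?PA) (\<lambda>\<omega>. (?rB \<omega>, ?rA \<omega>))) (borel \<Otimes>\<^sub>M (borel \<Otimes>\<^sub>M borel)) (\<lambda>(x, y). (G' x, H y))"
    using mA mB mG' mH by (subst distr_distr) (auto simp: comp_def eX eH)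
  also have "distr M (?PB \<Otimes>\<^sub>M ?PA) (\<lambda>\<omega>. (?rB \<omega>, ?rA \<omega>)) = distr M ?PB ?rB \<Otimes>\<^sub>M distr M ?PA ?rA"
    using ind[unfolded indep_var_distribution_eq] by simp
  also have "distr (distr M ?PB ?rB \<Otimes>\<^sub>M distr M ?PA ?rA) (borel \<Otimes>\<^sub>M (borel \<Otimes>\<^sub>M borel)) (\<lambda>(x, y). (G' x, H y))
     = distr (distr M ?PB ?rB) borel G' \<Otimes>\<^sub>M distr (distr M ?PA ?rA) (borel \<Otimes>\<^sub>M borel) H"
    by (rule pair_measure_distr[symmetric]) (use mG' mH pA.sigma_finite_measure in auto)
  also have "distr (distr M ?PB ?rB) borel G' = distr M borel X'"
    using mB mG' by (subst distr_distr) (auto simp: comp_def eX)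
  also have "distr (distr M ?PA ?rA) (borel \<Otimes>\<^sub>M borel) H = distr M (borel \<Otimes>\<^sub>M borel) (\<lambda>\<omega>. (theta 1 \<omega>, eps 1 \<omega>))"
    using mA mH by (subst distr_distr) (auto simp: comp_def eH)
  finally show ?thesis .
qed

lemma indep_te: "indep_var borel (theta 1) borel (eps 1)"
proof -
  have ind: "indep_var (PiM {Inr 1} (\<lambda>_. borel)) (\<lambda>\<omega>. restrict (\<lambda>i. XX i \<omega>) {Inr 1})
      (PiM {Inl 1} (\<lambda>_. borel)) (\<lambda>\<omega>. restrict (\<lambda>i. XX i \<omega>) {Inl 1})"
    by (rule indep_var_restrict[OF indep']) (auto simp: II_def)
  have "indep_var borel ((\<lambda>z. z (Inr 1)) \<circ> (\<lambda>\<omega>. restrict (\<lambda>i. XX i \<omega>) {Inr 1}))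
     borel ((\<lambda>z. z (Inl 1)) \<circ> (\<lambda>\<omega>. restrict (\<lambda>i. XX i \<omega>) {Inl 1}))"
    by (rule indep_var_compose[OF ind]) (auto intro!: measurable_component_singleton)
  then show ?thesis by (simp add: comp_def XX_def)
qed

lemma distr_te: "distr M (borel \<Otimes>\<^sub>M borel) (\<lambda>\<omega>. (theta 1 \<omega>, eps 1 \<omega>)) = distr M borel (theta 1) \<Otimes>\<^sub>M Exp1"
  using indep_te[unfolded indep_var_distribution_eq] distr_eps[of 1] by simp

lemma stat_mu: "distr (distr M borel (Xinf \<alpha> eps theta) \<Otimes>\<^sub>M (distr M borel (theta 1) \<Otimes>\<^sub>M Exp1)) borel (step_map \<alpha>)
    = distr M borel (Xinf \<alpha> eps theta)"
proof -
  have "distr M borel (Xinf \<alpha> eps theta) = distr M borel (\<lambda>\<omega>. step_map \<alpha> (X' \<omega>, theta 1 \<omega>, eps 1 \<omega>))"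
    by (rule distr_cong_AE[OF refl refl AE_step]) auto
  also have "\<dots> = distr (distr M (borel \<Otimes>\<^sub>M (borel \<Otimes>\<^sub>M borel)) (\<lambda>\<omega>. (X' \<omega>, theta 1 \<omega>, eps 1 \<omega>))) borel (step_map \<alpha>)"
    by (subst distr_distr) (auto simp: comp_def)
  also have "distr M (borel \<Otimes>\<^sub>M (borel \<Otimes>\<^sub>M borel)) (\<lambda>\<omega>. (X' \<omega>, theta 1 \<omega>, eps 1 \<omega>))
      = distr M borel X' \<Otimes>\<^sub>M distr M (borel \<Otimes>\<^sub>M borel) (\<lambda>\<omega>. (theta 1 \<omega>, eps 1 \<omega>))"
    by (rule distr_X'_te)
  also have "\<dots> = distr M borel (Xinf \<alpha> eps theta) \<Otimes>\<^sub>M (distr M borel (theta 1) \<Otimes>\<^sub>M Exp1)"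
    unfolding distr_X' distr_te ..
  finally show ?thesis ..
qed

end

context L begin

lemma Theta_eq: "distr M borel (theta 1) = ThetaD"
  by (rule distr_theta_D) simp

lemma ab_exists: "\<exists>a b. 0 < a \<and> a < b \<and> b < 1 \<and> 0 < (\<integral>\<^sup>+t. ennreal (h t * t * indicator {a..b} t) \<partial>lborel)"
proof (rule ccontr)
  assume "\<not> ?thesis"
  then have z: "(\<integral>\<^sup>+t. ennreal (h t * t * indicator {a..b} t) \<partial>lborel) = 0"
    if "0 < a" "a < b" "b < 1" for a b using that by (auto simp: zero_less_iff_neq_zero)
  have "AE t in lborel. ennreal (h t * t * indicator {1/(real n+3)..1-1/(real n+3)} t) = 0" for n
  proof -
    have "1/(real n+3) < 1-1/(real n+3)" by (simp add: field_simps)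
    then have "(\<integral>\<^sup>+t. ennreal (h t * t * indicator {1/(real n+3)..1-1/(real n+3)} t) \<partial>lborel) = 0"
      by (intro z) auto
    then show ?thesis by (subst (asm) nn_integral_0_iff_AE) auto
  qed
  then have "AE t in lborel. \<forall>n. ennreal (h t * t * indicator {1/(real n+3)..1-1/(real n+3)} t) = 0"
    by (simp add: AE_all_countable)
  then have "AE t in lborel. ennreal (indicator {0<..<1} t * h t * t) = 0"
  proof (rule eventually_mono)
    fix t assume H: "\<forall>n. ennreal (h t * t * indicator {1/(real n+3)..1-1/(real n+3)} t) = 0"
    show "ennreal (indicator {0<..<1} t * h t * t) = 0"
    proof (cases "0 < t \<and> t < 1")
      case True
      define \<epsilon> where "\<epsilon> = min t (1 - t)"
      have ep: "0 < \<epsilon>" using True by (simp add: \<epsilon>_def)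
      obtain n where n: "1 / \<epsilon> < real n" using reals_Archimedean2 by blast
      have "1 / (real n + 3) \<le> \<epsilon>"
      proof -
        have "1 / \<epsilon> < real n + 3" using n by simp
        then have "1 < (real n + 3) * \<epsilon>" using ep by (simp add: field_simps)
        then show ?thesis by (simp add: field_simps)
      qed
      then have "t \<in> {1/(real n+3)..1-1/(real n+3)}" unfolding \<epsilon>_def by auto
      then show ?thesis using H[rule_format, of n] True by (simp add: mult.commute mult.left_commute)
    qed simp
  qed
  then have "(\<integral>\<^sup>+ r. ennreal (indicator {0<..<1} r * h r * r) \<partial>lborel) = 0"
    by (subst nn_integral_0_iff_AE) auto
  then show False using h_norm by simp
qed

lemma ThetaD_pos: assumes "0 < a" "a < b" "b < 1" "0 < (\<integral>\<^sup>+t. ennreal (h t * t * indicator {a..b} t) \<partial>lborel)"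
  shows "0 < emeasure ThetaD {0<..b}"
proof -
  have "(\<integral>\<^sup>+t. ennreal (h t * t * indicator {a..b} t) \<partial>lborel) \<le> emeasure ThetaD {0<..b}"
    unfolding ThetaD_def using assms
    by (subst emeasure_density) (auto intro!: nn_integral_mono simp: indicator_def ennreal_mult'' h_nonneg)
  then show ?thesis using assms(4) by simp
qed

lemma Exp1_Ioc_pos: assumes "0 < b" shows "0 < emeasure Exp1 {0<..b}"
  unfolding Exp1_def using assms
  by (intro density_pos_set) (auto simp: exponential_density_def)

lemma box_bound:
  assumes st: "stationary_dist \<alpha> ThetaD \<nu>" and d: "0 < d" and a: "0 < a" and b: "0 < b"
  shows "emeasure \<nu> {0<..d} * (emeasure ThetaD {0<..a} * emeasure Exp1 {0<..b})
     \<le> emeasure \<nu> {0<..a * (b + d powr \<alpha>) powr (1 / \<alpha>)}"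
proof -
  have sn: "sets \<nu> = sets borel" and pn: "prob_space \<nu>"
    and eq: "distr (\<nu> \<Otimes>\<^sub>M (ThetaD \<Otimes>\<^sub>M Exp1)) borel (step_map \<alpha>) = \<nu>"
    using st by (auto simp: stationary_dist_def)
  interpret TE: prob_space "ThetaD \<Otimes>\<^sub>M Exp1"
    by (intro prob_space_pair ThetaD_prob Exp1_prob)
  let ?c = "a * (b + d powr \<alpha>) powr (1 / \<alpha>)"
  have ms: "step_map \<alpha> \<in> borel_measurable (\<nu> \<Otimes>\<^sub>M (ThetaD \<Otimes>\<^sub>M Exp1))"
    using sn by (intro step_map_meas) auto
  have in_c: "step_map \<alpha> (x, t, e) \<in> {0<..?c}" if x: "x \<in> {0<..d}" and t: "t \<in> {0<..a}" and e: "e \<in> {0<..b}" for x t e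
  proof -
    have "0 < e + x powr \<alpha>" using e x by (simp add: add_pos_nonneg)
    then have p: "0 < (e + x powr \<alpha>) powr (1 / \<alpha>)" by simp
    have "(e + x powr \<alpha>) powr (1 / \<alpha>) \<le> (b + d powr \<alpha>) powr (1 / \<alpha>)"
      using x e alpha by (intro powr_mono2 add_mono powr_mono2) auto
    then have "t * (e + x powr \<alpha>) powr (1 / \<alpha>) \<le> ?c"
      using t p by (intro mult_mono) auto
    then show "step_map \<alpha> (x, t, e) \<in> {0<..?c}" using t p by (simp add: step_map_def)
  qed
  have sp: "space (\<nu> \<Otimes>\<^sub>M (ThetaD \<Otimes>\<^sub>M Exp1)) = UNIV"
    using sets_eq_imp_space_eq[OF sn] by (simp add: space_pair_measure ThetaD_def)
  have sub: "{0<..d} \<times> ({0<..a} \<times> {0<..b}) \<subseteq> step_map \<alpha> -` {0<..?c} \<inter> space (\<nu> \<Otimes>\<^sub>M (ThetaD \<Otimes>\<^sub>M Exp1))"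
    unfolding sp using in_c by auto
  have "emeasure \<nu> {0<..d} * (emeasure ThetaD {0<..a} * emeasure Exp1 {0<..b})
      = emeasure (\<nu> \<Otimes>\<^sub>M (ThetaD \<Otimes>\<^sub>M Exp1)) ({0<..d} \<times> ({0<..a} \<times> {0<..b}))"
    using sn by (simp add: TE.emeasure_pair_measure_Times prob_space_imp_sigma_finite[OF Exp1_prob]
        sigma_finite_measure.emeasure_pair_measure_Times)
  also have "\<dots> \<le> emeasure (\<nu> \<Otimes>\<^sub>M (ThetaD \<Otimes>\<^sub>M Exp1)) (step_map \<alpha> -` {0<..?c} \<inter> space (\<nu> \<Otimes>\<^sub>M (ThetaD \<Otimes>\<^sub>M Exp1)))"
    by (rule emeasure_mono[OF sub]) (use ms in measurable)
  also have "\<dots> = emeasure \<nu> {0<..?c}"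
    by (subst (2) eq[symmetric]) (subst emeasure_distr, use ms in auto)
  finally show ?thesis .
qed

lemma stat_pos: assumes st: "stationary_dist \<alpha> ThetaD \<nu>" and y: "0 < y"
  shows "0 < emeasure \<nu> {0<..y}"
proof (rule ccontr)
  assume "\<not> ?thesis"
  then have y0: "emeasure \<nu> {0<..y} = 0" by (simp add: zero_less_iff_neq_zero)
  have sn: "sets \<nu> = sets borel" and one: "emeasure \<nu> {0<..} = 1"
    using st by (auto simp: stationary_dist_def)
  define p where "p c = emeasure \<nu> {0<..c}" for c
  have pmono: "c \<le> c' \<Longrightarrow> p c \<le> p c'" for c c'
    unfolding p_def by (rule emeasure_mono) (auto simp: sn)
  obtain n where n: "p (real n) \<noteq> 0"
  proof (rule ccontr)
    assume "\<not> thesis"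
    then have "\<And>n. emeasure \<nu> {0<..real n} = 0" using that unfolding p_def by blast
    then have "emeasure \<nu> (\<Union>n. {0<..real n}) = 0" by (intro emeasure_UN_eq_0) (auto simp: sn)
    moreover have "(\<Union>n. {0<..real n}) = {0<..}"
      by (auto intro: real_arch_simple)
    ultimately show False using one by simp
  qed
  define S where "S = {c. 0 < c \<and> p c = 0}"
  have yS: "y \<in> S" using y y0 by (simp add: S_def p_def)
  have bdd: "c < real n" if "c \<in> S" for c
  proof (rule ccontr)
    assume "\<not> c < real n"
    then have "p (real n) \<le> p c" by (intro pmono) simp
    with that n show False by (simp add: S_def)
  qed
  have bddS: "bdd_above S" unfolding bdd_above_def using bdd less_imp_le by blast
  define c0 where "c0 = Sup S"
  have c0y: "y \<le> c0" unfolding c0_def using yS bddS by (rule cSup_upper)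
  have low: "p c = 0" if "0 < c" "c < c0" for c
  proof -
    obtain s where "s \<in> S" "c < s" using \<open>c < c0\<close> yS bddS unfolding c0_def
      by (subst (asm) less_cSup_iff) auto
    note sc = this
    have "p c \<le> p s" using sc(2) by (intro pmono) simp
    moreover have "p s = 0" using sc(1) by (simp add: S_def)
    ultimately show ?thesis by simp
  qed
  have high: "p d \<noteq> 0" if "c0 < d" for d
  proof
    assume "p d = 0"
    then have "d \<in> S" using that c0y y by (simp add: S_def)
    then have "d \<le> c0" unfolding c0_def using bddS by (rule cSup_upper)
    with that show False by simp
  qed
  obtain a b where ab: "0 < a" "a < b" "b < 1" "0 < (\<integral>\<^sup>+t. ennreal (h t * t * indicator {a..b} t) \<partial>lborel)"
    using ab_exists by blast
  have Tb: "0 < emeasure ThetaD {0<..b}" by (rule ThetaD_pos[OF ab])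
  have b0: "0 < b" using ab by simp
  have c0: "0 < c0" using c0y y by simp
  define d where "d = c0 * (1 + 1 / b) / 2"
  have cb: "c0 < c0 / b" using c0 ab by (simp add: field_simps)
  define q where "q = c0 / b"
  have dd: "d = (c0 + q) / 2" unfolding d_def q_def by (simp add: field_simps)
  have cq: "c0 < q" using cb by (simp add: q_def)
  have d1: "c0 < d" using cq unfolding dd by simp
  have d2: "d < c0 / b" using cq unfolding dd q_def[symmetric] by simp
  have d0: "0 < d" using d1 c0 by simp
  define e where "e = ((c0 / b) powr \<alpha> - d powr \<alpha>) / 2"
  have dpow: "d powr \<alpha> < (c0 / b) powr \<alpha>" using d2 d0 alpha by (intro powr_less_mono2) auto
  have e0: "0 < e" using dpow by (simp add: e_def)
  have "(e + d powr \<alpha>) powr (1 / \<alpha>) < ((c0 / b) powr \<alpha>) powr (1 / \<alpha>)"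
  proof (rule powr_less_mono2)
    have "e + d powr \<alpha> = ((c0 / b) powr \<alpha> + d powr \<alpha>) / 2" by (simp add: e_def field_simps)
    then show "e + d powr \<alpha> < (c0 / b) powr \<alpha>" using dpow by simp
    show "0 \<le> e + d powr \<alpha>" using e0 by simp
  qed (use alpha in simp)
  also have "\<dots> = c0 / b" using c0 b0 alpha by (simp add: powr_powr)
  finally have lt: "b * (e + d powr \<alpha>) powr (1 / \<alpha>) < c0" using b0 by (simp add: field_simps)
  have pos: "0 < b * (e + d powr \<alpha>) powr (1 / \<alpha>)"
  proof -
    have "0 < e + d powr \<alpha>" using e0 by (simp add: add_pos_nonneg)
    then show ?thesis using b0 by simp
  qed
  have "p d * (emeasure ThetaD {0<..b} * emeasure Exp1 {0<..e}) \<le> p (b * (e + d powr \<alpha>) powr (1 / \<alpha>))"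
    unfolding p_def by (rule box_bound[OF st d0 b0 e0])
  also have "\<dots> = 0" by (rule low[OF pos lt])
  finally have "p d * (emeasure ThetaD {0<..b} * emeasure Exp1 {0<..e}) = 0" by simp
  then show False using high[OF d1] Tb Exp1_Ioc_pos[OF e0] by (auto simp: zero_less_iff_neq_zero)
qed

end

context L begin

definition W :: "real \<Rightarrow> real \<Rightarrow> real" where "W x e = (e + x powr \<alpha>) powr (1 / \<alpha>)"
definition K' :: "real \<Rightarrow> real \<Rightarrow> ennreal" where
  "K' w y = ennreal (indicator {0<..<1} (y / w) * h (y / w) / w ^ 2)"
definition K :: "real \<Rightarrow> real \<Rightarrow> ennreal" where
  "K w y = ennreal (indicator {0<..} y * y) * K' w y"

lemma W_meas[measurable (raw)]:
  assumes [measurable]: "f \<in> borel_measurable N" "g \<in> borel_measurable N"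
  shows "(\<lambda>z. W (f z) (g z)) \<in> borel_measurable N"
  unfolding W_def by measurable
lemma K'_meas[measurable (raw)]:
  assumes [measurable]: "f \<in> borel_measurable N" "g \<in> borel_measurable N"
  shows "(\<lambda>z. K' (f z) (g z)) \<in> borel_measurable N"
proof -
  have [measurable]: "(\<lambda>z. h (g z / f z)) \<in> borel_measurable N"
    by (rule measurable_compose[OF _ h_meas]) measurable
  show ?thesis unfolding K'_def by measurable
qed
lemma K_meas[measurable (raw)]:
  assumes [measurable]: "f \<in> borel_measurable N" "g \<in> borel_measurable N"
  shows "(\<lambda>z. K (f z) (g z)) \<in> borel_measurable N"
  unfolding K_def by measurable

lemma W_pos: "0 < e \<Longrightarrow> 0 < W x e"
proof -
  assume "0 < e"
  then have "0 < e + x powr \<alpha>" by (rule add_pos_nonneg) simp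
  then show ?thesis unfolding W_def by simp
qed

lemma step_W: "step_map \<alpha> (x, t, e) = t * W x e"
  by (simp add: step_map_def W_def)

lemma K_pointwise: assumes w: "0 < w"
  shows "ennreal (1 / w) * (ennreal (indicator {0<..<1} (y / w) * h (y / w) * (y / w)) * c) = c * K w y"
proof (cases "0 < y / w \<and> y / w < 1")
  case True
  then have y: "0 < y" using w by (simp add: zero_less_divide_iff)
  have hy: "0 \<le> h (y / w)" using True h_nonneg by auto
  have "ennreal (1 / w) * ennreal (indicator {0<..<1} (y / w) * h (y / w) * (y / w))
      = ennreal (1 / w * (h (y / w) * (y / w)))"
    using True hy w y by (simp add: ennreal_mult[symmetric])
  also have "\<dots> = ennreal y * ennreal (h (y / w) / w ^ 2)"
    using hy w y by (simp add: ennreal_mult[symmetric] power2_eq_square field_simps)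
  finally have eq: "ennreal (1 / w) * ennreal (indicator {0<..<1} (y / w) * h (y / w) * (y / w))
      = ennreal y * ennreal (h (y / w) / w ^ 2)" .
  have "ennreal (1 / w) * (ennreal (indicator {0<..<1} (y / w) * h (y / w) * (y / w)) * c)
    = (ennreal (1 / w) * ennreal (indicator {0<..<1} (y / w) * h (y / w) * (y / w))) * c"
    by (simp only: mult.assoc)
  also have "\<dots> = c * (ennreal y * ennreal (h (y / w) / w ^ 2))" unfolding eq by (simp only: mult.commute)
  also have "ennreal y * ennreal (h (y / w) / w ^ 2) = K w y"
    using True y by (simp add: K_def K'_def)
  finally show ?thesis .
next
  case False
  have "indicator {0<..<1} (y / w) = (0::real)" using False by (simp add: indicator_def)
  then show ?thesis by (simp add: K_def K'_def)
qed

lemma D1: assumes w: "0 < w" and A[measurable]: "A \<in> sets borel"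
  shows "(\<integral>\<^sup>+ t. indicator A (t * w) \<partial>ThetaD) = (\<integral>\<^sup>+ y. indicator A y * K w y \<partial>lborel)"
proof -
  have "(\<integral>\<^sup>+ t. indicator A (t * w) \<partial>ThetaD)
      = (\<integral>\<^sup>+ t. ennreal (indicator {0<..<1} t * h t * t) * indicator A (t * w) \<partial>lborel)"
    unfolding ThetaD_def by (subst nn_integral_density) auto
  also have "\<dots> = ennreal \<bar>1 / w\<bar> * (\<integral>\<^sup>+ y. ennreal (indicator {0<..<1} (0 + 1 / w * y) * h (0 + 1 / w * y) * (0 + 1 / w * y))
       * indicator A ((0 + 1 / w * y) * w) \<partial>lborel)"
    by (rule nn_integral_real_affine) (use w in auto)
  also have "\<dots> = (\<integral>\<^sup>+ y. ennreal (1 / w) * (ennreal (indicator {0<..<1} (y / w) * h (y / w) * (y / w)) * indicator A y) \<partial>lborel)"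
    using w by (subst nn_integral_cmult[symmetric]) auto
  also have "\<dots> = (\<integral>\<^sup>+ y. indicator A y * K w y \<partial>lborel)"
    by (intro nn_integral_cong) (rule K_pointwise[OF w])
  finally show ?thesis .
qed

definition FF' :: "real measure \<Rightarrow> real \<Rightarrow> ennreal" where
  "FF' \<nu> y = (\<integral>\<^sup>+ x. \<integral>\<^sup>+ e. K' (W x e) y \<partial>Exp1 \<partial>\<nu>)"

lemma D2:
  assumes sn[measurable_cong]: "sets \<nu> = sets borel" and pn: "prob_space \<nu>" and A[measurable]: "A \<in> sets borel"
  shows "emeasure (distr (\<nu> \<Otimes>\<^sub>M (ThetaD \<Otimes>\<^sub>M Exp1)) borel (step_map \<alpha>)) A
    = (\<integral>\<^sup>+ y. indicator A y * (ennreal (indicator {0<..} y * y) * FF' \<nu> y) \<partial>lborel)"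
proof -
  interpret TE: prob_space "ThetaD \<Otimes>\<^sub>M Exp1"
    by (intro prob_space_pair ThetaD_prob Exp1_prob)
  interpret T: prob_space ThetaD by (rule ThetaD_prob)
  interpret E: prob_space Exp1 by (rule Exp1_prob)
  interpret N: prob_space \<nu> by (rule pn)
  interpret TEp: pair_sigma_finite ThetaD Exp1 ..
  interpret ELp: pair_sigma_finite Exp1 lborel ..
  interpret NLp: pair_sigma_finite \<nu> lborel ..
  have ms: "step_map \<alpha> \<in> borel_measurable (\<nu> \<Otimes>\<^sub>M (ThetaD \<Otimes>\<^sub>M Exp1))"
    by (rule step_map_meas[OF sn]) simp_all
  have "emeasure (distr (\<nu> \<Otimes>\<^sub>M (ThetaD \<Otimes>\<^sub>M Exp1)) borel (step_map \<alpha>)) A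
     = (\<integral>\<^sup>+ p. indicator A (step_map \<alpha> p) \<partial>(\<nu> \<Otimes>\<^sub>M (ThetaD \<Otimes>\<^sub>M Exp1)))"
  proof -
    have "(\<integral>\<^sup>+ y. indicator A y \<partial>distr (\<nu> \<Otimes>\<^sub>M (ThetaD \<Otimes>\<^sub>M Exp1)) borel (step_map \<alpha>))
      = (\<integral>\<^sup>+ p. indicator A (step_map \<alpha> p) \<partial>(\<nu> \<Otimes>\<^sub>M (ThetaD \<Otimes>\<^sub>M Exp1)))"
      by (rule nn_integral_distr) (use ms in auto)
    then show ?thesis by (subst (asm) nn_integral_indicator) auto
  qed
  also have "\<dots> = (\<integral>\<^sup>+ x. \<integral>\<^sup>+ q. indicator A (step_map \<alpha> (x, q)) \<partial>(ThetaD \<Otimes>\<^sub>M Exp1) \<partial>\<nu>)"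
    using ms by (subst TE.nn_integral_fst) auto
  also have "\<dots> = (\<integral>\<^sup>+ x. \<integral>\<^sup>+ y. \<integral>\<^sup>+ e. indicator A y * K (W x e) y \<partial>Exp1 \<partial>lborel \<partial>\<nu>)"
  proof (rule nn_integral_cong)
    fix x
    have "(\<integral>\<^sup>+ q. indicator A (step_map \<alpha> (x, q)) \<partial>(ThetaD \<Otimes>\<^sub>M Exp1))
       = (\<integral>\<^sup>+ e. \<integral>\<^sup>+ t. indicator A (t * W x e) \<partial>ThetaD \<partial>Exp1)"
      by (subst TEp.nn_integral_snd[symmetric]) (auto simp: step_W)
    also have "\<dots> = (\<integral>\<^sup>+ e. \<integral>\<^sup>+ y. indicator A y * K (W x e) y \<partial>lborel \<partial>Exp1)"
      using AE_Exp1_pos by (intro nn_integral_cong_AE) (auto elim!: eventually_mono intro!: D1 W_pos)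
    also have "\<dots> = (\<integral>\<^sup>+ y. \<integral>\<^sup>+ e. indicator A y * K (W x e) y \<partial>Exp1 \<partial>lborel)"
      by (subst ELp.Fubini') auto
    finally show "(\<integral>\<^sup>+ q. indicator A (step_map \<alpha> (x, q)) \<partial>(ThetaD \<Otimes>\<^sub>M Exp1))
       = (\<integral>\<^sup>+ y. \<integral>\<^sup>+ e. indicator A y * K (W x e) y \<partial>Exp1 \<partial>lborel)" .
  qed
  also have "\<dots> = (\<integral>\<^sup>+ y. \<integral>\<^sup>+ x. \<integral>\<^sup>+ e. indicator A y * K (W x e) y \<partial>Exp1 \<partial>\<nu> \<partial>lborel)"
    by (subst NLp.Fubini') auto
  also have "\<dots> = (\<integral>\<^sup>+ y. indicator A y * (ennreal (indicator {0<..} y * y) * FF' \<nu> y) \<partial>lborel)"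
    unfolding FF'_def K_def
    by (intro nn_integral_cong) (simp add: nn_integral_cmult mult.assoc)
  finally show ?thesis .
qed

end

context L begin

lemma Q_pos:
  assumes x: "0 < x" "x \<le> y"
  shows "0 < (\<integral>\<^sup>+ e. K' (W x e) y \<partial>Exp1)"
proof -
  obtain a b where ab: "0 < a" "a < b" "b < 1" and int_pos: "0 < (\<integral>\<^sup>+t. ennreal (h t * t * indicator {a..b} t) \<partial>lborel)"
    using ab_exists by blast
  have y: "0 < y" using x by simp
  define k where "k e = indicator {0<..<1} (y / W x e) * h (y / W x e) / (W x e) ^ 2" for e
  define F where "F e = exponential_density 1 e * k e" for e
  define g where "g s = (y / (- s)) powr \<alpha> - x powr \<alpha>" for s
  define g' where "g' s = \<alpha> * (y / (- s)) powr (\<alpha> - 1) * (y / s ^ 2)" for s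
  have [measurable]: "g \<in> borel_measurable borel" unfolding g_def by measurable
  have [measurable]: "g' \<in> borel_measurable borel" unfolding g'_def by measurable
  have hk: "0 \<le> k e" for e
    using h_nonneg by (auto simp: k_def indicator_def)
  have [measurable]: "F \<in> borel_measurable borel"
  proof -
    have [measurable]: "(\<lambda>e. h (y / W x e)) \<in> borel_measurable borel"
      by (rule measurable_compose[OF _ h_meas]) measurable
    show ?thesis unfolding F_def k_def by measurable
  qed
  have Fg: "F (g s) * g' s = exp (- g s) * (h (- s) * (- s) ^ 2 / y ^ 2) * g' s"
    if s: "s \<in> {-b..-a}" for s
  proof -
    define t where "t = - s"
    have t: "0 < t" "t < 1" using s ab by (auto simp: t_def)
    have yt: "y < y / t" using t y by (simp add: field_simps)
    have "y powr \<alpha> < (y / t) powr \<alpha>" using yt y alpha by (intro powr_less_mono2) auto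
    moreover have "x powr \<alpha> \<le> y powr \<alpha>" using x alpha by (intro powr_mono2) auto
    ultimately have g0: "0 < g s" unfolding g_def t_def[symmetric] by simp
    have "W x (g s) = ((y / t) powr \<alpha>) powr (1 / \<alpha>)"
      unfolding W_def g_def t_def by simp
    also have "\<dots> = y / t" using t y alpha by (simp add: powr_powr)
    finally have Wg: "W x (g s) = y / t" .
    have "y / W x (g s) = t" using Wg y t by simp
    then have "k (g s) = h t / (y / t) ^ 2" using t unfolding k_def by (simp add: Wg)
    also have "\<dots> = h t * t ^ 2 / y ^ 2" using t by (simp add: field_simps)
    finally show ?thesis unfolding F_def t_def using g0 by (simp add: exponential_density_def)
  qed
  have gpos: "0 < g' s" if "s \<in> {-b..-a}" for s
    using that ab y alpha by (auto simp: g'_def)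
  have deriv: "(g has_real_derivative g' s) (at s)" if "s \<in> {-b..-a}" for s
  proof -
    have s0: "s < 0" using that ab by auto
    have d1: "((\<lambda>s. y / (-s)) has_real_derivative (y / s^2)) (at s)"
      using s0 by (auto intro!: derivative_eq_intros simp: power2_eq_square field_simps)
    have "((\<lambda>s. (y / (-s)) powr \<alpha>) has_real_derivative \<alpha> * (y / (-s)) powr (\<alpha> - real 1) * (y / s^2)) (at s)"
      by (rule DERIV_fun_powr[OF d1]) (use s0 y in \<open>simp add: divide_pos_neg\<close>)
    from DERIV_diff[OF this DERIV_const[of "x powr \<alpha>"]]
    show ?thesis unfolding g_def g'_def by simp
  qed
  have cont: "continuous_on {-b..-a} g'"
    unfolding g'_def using ab y
    by (intro continuous_intros continuous_on_powr) (auto simp: divide_pos_neg)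
  have sbm: "set_borel_measurable borel {g (-b)..g (-a)} F"
    unfolding set_borel_measurable_def by measurable
  have sub: "(\<integral>\<^sup>+e. ennreal (F e * indicator {g (-b)..g (-a)} e) \<partial>lborel)
      = (\<integral>\<^sup>+s. ennreal (F (g s) * g' s * indicator {-b..-a} s) \<partial>lborel)"
    by (rule nn_integral_substitution[OF sbm deriv cont]) (use gpos ab in \<open>auto simp: less_imp_le\<close>)
  have pos_s: "0 < (\<integral>\<^sup>+s. ennreal (F (g s) * g' s * indicator {-b..-a} s) \<partial>lborel)"
  proof (rule ccontr)
    assume "\<not> ?thesis"
    then have "(\<integral>\<^sup>+s. ennreal (F (g s) * g' s * indicator {-b..-a} s) \<partial>lborel) = 0"
      by (simp add: zero_less_iff_neq_zero)
    then have "AE s in lborel. ennreal (F (g s) * g' s * indicator {-b..-a} s) = 0"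
      by (subst (asm) nn_integral_0_iff_AE) auto
    then have "AE s in lborel. ennreal (h (- s) * (- s) * indicator {-b..-a} s) = 0"
    proof (rule eventually_mono)
      fix s assume H: "ennreal (F (g s) * g' s * indicator {-b..-a} s) = 0"
      show "ennreal (h (- s) * (- s) * indicator {-b..-a} s) = 0"
      proof (cases "s \<in> {-b..-a}")
        case True
        have hs: "0 \<le> h (- s)" using True ab by (intro h_nonneg) auto
        have "F (g s) * g' s \<le> 0" using H True by (simp add: ennreal_eq_0_iff)
        then have "exp (- g s) * (h (- s) * (- s) ^ 2 / y ^ 2) * g' s \<le> 0" using Fg[OF True] by simp
        then have "h (- s) * (- s) ^ 2 \<le> 0" using gpos[OF True] y
          by (simp add: mult_le_0_iff zero_le_mult_iff divide_le_0_iff)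
        then have "h (- s) = 0" using hs True ab by (simp add: mult_le_0_iff)
        then show ?thesis by simp
      qed simp
    qed
    then have "(\<integral>\<^sup>+s. ennreal (h (- s) * (- s) * indicator {-b..-a} s) \<partial>lborel) = 0"
      by (subst nn_integral_0_iff_AE) auto
    moreover have "(\<integral>\<^sup>+t. ennreal (h t * t * indicator {a..b} t) \<partial>lborel)
        = (\<integral>\<^sup>+s. ennreal (h (- s) * (- s) * indicator {-b..-a} s) \<partial>lborel)"
    proof -
      have "(\<integral>\<^sup>+t. ennreal (h t * t * indicator {a..b} t) \<partial>lborel)
          = ennreal \<bar>-1\<bar> * (\<integral>\<^sup>+s. ennreal (h (0 + -1 * s) * (0 + -1 * s) * indicator {a..b} (0 + -1 * s)) \<partial>lborel)"
        by (rule nn_integral_real_affine) auto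
      also have "\<dots> = (\<integral>\<^sup>+s. ennreal (h (- s) * (- s) * indicator {-b..-a} s) \<partial>lborel)"
        by (simp, intro nn_integral_cong) (auto simp: indicator_def)
      finally show ?thesis .
    qed
    ultimately show False using int_pos by simp
  qed
  have "(\<integral>\<^sup>+e. ennreal (F e * indicator {g (-b)..g (-a)} e) \<partial>lborel) \<le> (\<integral>\<^sup>+ e. K' (W x e) y \<partial>Exp1)"
  proof -
    have "(\<integral>\<^sup>+ e. K' (W x e) y \<partial>Exp1) = (\<integral>\<^sup>+ e. ennreal (exponential_density 1 e) * K' (W x e) y \<partial>lborel)"
      unfolding Exp1_def by (subst nn_integral_density) auto
    also have "\<dots> = (\<integral>\<^sup>+ e. ennreal (F e) \<partial>lborel)"
      by (intro nn_integral_cong)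
         (simp add: F_def K'_def k_def[symmetric] ennreal_mult[symmetric] hk exponential_density_nonneg)
    moreover have "0 \<le> F e" for e using hk[of e] exponential_density_nonneg[of 1 e] by (simp add: F_def)
    ultimately show ?thesis by (auto intro!: nn_integral_mono ennreal_leI simp: indicator_def)
  qed
  then show ?thesis using sub pos_s by simp
qed

end

context L begin

lemma FF'_meas:
  assumes sn[measurable_cong]: "sets \<nu> = sets borel" and pn: "prob_space \<nu>"
  shows "FF' \<nu> \<in> borel_measurable borel"
proof -
  interpret E: prob_space Exp1 by (rule Exp1_prob)
  interpret N: prob_space \<nu> by (rule pn)
  have "(\<lambda>(y, x). \<integral>\<^sup>+ e. K' (W x e) y \<partial>Exp1) \<in> borel_measurable (borel \<Otimes>\<^sub>M \<nu>)"
    by measurable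
  then have "(\<lambda>y. \<integral>\<^sup>+ x. \<integral>\<^sup>+ e. K' (W x e) y \<partial>Exp1 \<partial>\<nu>) \<in> borel_measurable borel"
    by (rule N.borel_measurable_nn_integral)
  then show ?thesis unfolding FF'_def[abs_def] .
qed

lemma FF'_pos:
  assumes st: "stationary_dist \<alpha> ThetaD \<nu>" and y: "0 < y"
  shows "0 < FF' \<nu> y"
proof (rule ccontr)
  assume "\<not> ?thesis"
  then have z: "FF' \<nu> y = 0" by (simp add: zero_less_iff_neq_zero)
  have sn[measurable_cong]: "sets \<nu> = sets borel" and pn: "prob_space \<nu>"
    using st by (auto simp: stationary_dist_def)
  interpret E: prob_space Exp1 by (rule Exp1_prob)
  have [measurable]: "(\<lambda>x. \<integral>\<^sup>+ e. K' (W x e) y \<partial>Exp1) \<in> borel_measurable \<nu>"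
    by measurable
  have "AE x in \<nu>. (\<integral>\<^sup>+ e. K' (W x e) y \<partial>Exp1) = 0"
    using z unfolding FF'_def by (subst (asm) nn_integral_0_iff_AE) auto
  then have "AE x in \<nu>. x \<notin> {0<..y}"
    by (rule eventually_mono) (use Q_pos in fastforce)
  then have "emeasure \<nu> {0<..y} = 0"
    by (subst (asm) AE_iff_measurable[of "{0<..y}"]) (auto simp: sets_eq_imp_space_eq[OF sn])
  with stat_pos[OF st y] show False by simp
qed

abbreviation "mu \<equiv> distr M borel (Xinf \<alpha> eps theta)"

lemma AE_Xinf_pos: "AE \<omega> in M. 0 < Xinf \<alpha> eps theta \<omega>"
proof -
  have t1: "AE \<omega> in M. 0 < theta 1 \<omega> \<and> theta 1 \<omega> < 1" by (rule theta_range) simp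
  have e1: "AE \<omega> in M. 0 < eps 1 \<omega>" by (rule AE_eps_pos) simp
  show ?thesis using t1 e1 AE_summable AE_XT_nonneg
  proof eventually_elim
    case (elim \<omega>)
    have "0 < XT \<omega> 0" using elim by (simp add: Xterm_0)
    then have "0 < SS \<omega>" unfolding SS_def using elim by (intro suminf_pos2[of _ 0]) auto
    then show ?case by (simp add: Xinf_SS)
  qed
qed

lemma stationary_mu: "stationary_dist \<alpha> ThetaD mu"
  unfolding stationary_dist_def
proof (intro conjI)
  show "prob_space mu" by (rule prob_space_distr) simp
  show "sets mu = sets borel" by simp
  show "emeasure mu {0<..} = 1"
  proof -
    have "emeasure mu {0<..} = emeasure M {\<omega> \<in> space M. 0 < Xinf \<alpha> eps theta \<omega>}"
      by (subst emeasure_distr) (auto intro!: arg_cong[where f="emeasure M"])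
    also have "\<dots> = 1" using AE_Xinf_pos by (subst emeasure_eq_1_AE) auto
    finally show ?thesis .
  qed
  show "distr (mu \<Otimes>\<^sub>M (ThetaD \<Otimes>\<^sub>M Exp1)) borel (step_map \<alpha>) = mu"
    using stat_mu unfolding Theta_eq .
qed

lemma density_mu: "\<exists>f. f \<in> borel_measurable borel \<and> (\<forall>x. f x \<ge> 0)
          \<and> mu = density lborel (\<lambda>x. ennreal (indicator {0<..} x * x * f x))
          \<and> (AE x in lborel. 0 < x \<longrightarrow> 0 < f x)"
proof -
  have sn: "sets mu = sets borel" by simp
  have pn: "prob_space mu" by (rule prob_space_distr) simp
  interpret N: prob_space mu by (rule pn)
  define FF where "FF y = ennreal (indicator {0<..} y * y) * FF' mu y" for y
  have [measurable]: "FF' mu \<in> borel_measurable borel" by (rule FF'_meas[OF sn pn])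
  have [measurable]: "FF \<in> borel_measurable borel" unfolding FF_def by measurable
  have mu_eq: "mu = density lborel FF"
  proof (rule measure_eqI)
    show "sets mu = sets (density lborel FF)" by simp
    fix A assume "A \<in> sets mu"
    then have A[measurable]: "A \<in> sets borel" by simp
    have "emeasure mu A = (\<integral>\<^sup>+ y. indicator A y * FF y \<partial>lborel)"
      unfolding FF_def using D2[OF sn pn A] stationary_mu[unfolded stationary_dist_def] by simp
    also have "\<dots> = emeasure (density lborel FF) A"
      by (subst emeasure_density) (auto intro!: nn_integral_cong simp: mult.commute)
    finally show "emeasure mu A = emeasure (density lborel FF) A" .
  qed
  have "(\<integral>\<^sup>+ y. FF y \<partial>lborel) = 1"
    using N.emeasure_space_1 mu_eq emeasure_density[of FF lborel UNIV] by simp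
  then have fin: "AE y in lborel. FF y \<noteq> \<infinity>"
    by (intro nn_integral_PInf_AE) auto
  define f where "f y = enn2real (FF' mu y)" for y
  have fin': "AE y in lborel. 0 < y \<longrightarrow> FF' mu y \<noteq> \<infinity>"
    using fin by (rule eventually_mono) (auto simp: FF_def ennreal_mult_eq_top_iff)
  have fm[measurable]: "f \<in> borel_measurable borel" unfolding f_def by measurable
  show ?thesis
  proof (intro exI conjI)
    show "f \<in> borel_measurable borel" by (rule fm)
    show "\<forall>x. 0 \<le> f x" by (simp add: f_def)
    show "mu = density lborel (\<lambda>x. ennreal (indicator {0<..} x * x * f x))"
      unfolding mu_eq
    proof (rule density_cong)
      show "AE x in lborel. FF x = ennreal (indicator {0<..} x * x * f x)"
        using fin' by (rule eventually_mono)
           (auto simp: FF_def f_def ennreal_mult ennreal_enn2real_if indicator_def)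
    qed auto
    show "AE x in lborel. 0 < x \<longrightarrow> 0 < f x"
      using fin' by (rule eventually_mono)
        (use FF'_pos[OF stationary_mu] in \<open>auto simp: f_def enn2real_positive_iff top.not_eq_extremum\<close>)
  qed
qed

end

context L begin

definition phi :: "real measure \<Rightarrow> real \<Rightarrow> complex" where
  "phi \<nu> = char (distr \<nu> borel (\<lambda>x. x powr \<alpha>))"

lemma phi_eq: assumes sn: "sets \<nu> = sets borel"
  shows "phi \<nu> u = (\<integral>x. iexp (u * x powr \<alpha>) \<partial>\<nu>)"
proof -
  have "(\<lambda>x. x powr \<alpha>) \<in> borel_measurable \<nu>" using sn by (simp add: measurable_cong_sets[OF sn refl])
  then show ?thesis unfolding phi_def char_def by (subst integral_distr) auto
qed

lemma real_dist_pow: assumes sn: "sets \<nu> = sets borel" and pn: "prob_space \<nu>"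
  shows "real_distribution (distr \<nu> borel (\<lambda>x. x powr \<alpha>))"
proof -
  have "(\<lambda>x. x powr \<alpha>) \<in> borel_measurable \<nu>" using sn by (simp add: measurable_cong_sets[OF sn refl])
  then show ?thesis using prob_space.real_distribution_distr[OF pn] by blast
qed

lemma phi_bound: assumes sn: "sets \<nu> = sets borel" and pn: "prob_space \<nu>"
  shows "norm (phi \<nu> u) \<le> 1"
  unfolding phi_def using real_distribution.cmod_char_le_1[OF real_dist_pow[OF sn pn]] .

lemma phi_meas[measurable]: assumes sn: "sets \<nu> = sets borel" and pn: "prob_space \<nu>"
  shows "phi \<nu> \<in> borel_measurable borel"
  unfolding phi_def using real_distribution.char_measurable[OF real_dist_pow[OF sn pn]] .

lemma phi_cont: assumes sn: "sets \<nu> = sets borel" and pn: "prob_space \<nu>"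
  shows "isCont (phi \<nu>) u"
  unfolding phi_def using real_distribution.isCont_char[OF real_dist_pow[OF sn pn]] .

lemma phi_zero: assumes sn: "sets \<nu> = sets borel" and pn: "prob_space \<nu>"
  shows "phi \<nu> 0 = 1"
  unfolding phi_def using real_distribution.char_zero[OF real_dist_pow[OF sn pn]] .

lemma norm_iexp[simp]: "norm (iexp x) = 1"
  using norm_exp_i_times[of x] by simp

lemma char_Exp1_bound: "norm (char Exp1 u) \<le> 1"
proof -
  have "real_distribution Exp1"
    unfolding real_distribution_def real_distribution_axioms_def using Exp1_prob by simp
  then show ?thesis by (rule real_distribution.cmod_char_le_1)
qed

lemma char_Exp1_meas[measurable]: "char Exp1 \<in> borel_measurable borel"
proof -
  have "real_distribution Exp1"
    unfolding real_distribution_def real_distribution_axioms_def using Exp1_prob by simp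
  then show ?thesis by (rule real_distribution.char_measurable)
qed

lemma iexp_split: assumes t: "0 \<le> t" and ex: "0 \<le> e + x powr \<alpha>"
  shows "iexp (s * step_map \<alpha> (x, t, e) powr \<alpha>) = iexp (s * t powr \<alpha> * e) * iexp (s * t powr \<alpha> * x powr \<alpha>)"
proof -
  have "step_map \<alpha> (x, t, e) powr \<alpha> = t powr \<alpha> * (e + x powr \<alpha>)"
    unfolding step_map_def using t ex by (simp add: powr_mult powr_inv_powr)
  then have "complex_of_real (s * step_map \<alpha> (x, t, e) powr \<alpha>) = complex_of_real (s * t powr \<alpha> * e) + complex_of_real (s * t powr \<alpha> * x powr \<alpha>)"
    by (simp add: distrib_left)
  then show ?thesis by (simp only: distrib_left exp_add)
qed

lemma char_eq:
  assumes st: "stationary_dist \<alpha> ThetaD \<nu>"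
  shows "phi \<nu> s = (\<integral>t. char Exp1 (s * t powr \<alpha>) * phi \<nu> (s * t powr \<alpha>) \<partial>ThetaD)"
proof -
  have sn[measurable_cong]: "sets \<nu> = sets borel" and pn: "prob_space \<nu>"
    and eq: "distr (\<nu> \<Otimes>\<^sub>M (ThetaD \<Otimes>\<^sub>M Exp1)) borel (step_map \<alpha>) = \<nu>"
    using st by (auto simp: stationary_dist_def)
  interpret TE: prob_space "ThetaD \<Otimes>\<^sub>M Exp1"
    by (intro prob_space_pair ThetaD_prob Exp1_prob)
  interpret T: prob_space ThetaD by (rule ThetaD_prob)
  interpret E: prob_space Exp1 by (rule Exp1_prob)
  interpret N: prob_space \<nu> by (rule pn)
  interpret NTE: pair_prob_space \<nu> "ThetaD \<Otimes>\<^sub>M Exp1" ..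
  interpret TEp: pair_prob_space ThetaD Exp1 ..
  let ?P = "\<nu> \<Otimes>\<^sub>M (ThetaD \<Otimes>\<^sub>M Exp1)"
  have PPfin: "finite_measure ?P"
    by (rule prob_space.axioms(1)) (intro prob_space_pair TE.prob_space_axioms pn)
  have TEfin: "finite_measure (ThetaD \<Otimes>\<^sub>M Exp1)" by (rule TE.finite_measure_axioms)
  have ms: "step_map \<alpha> \<in> borel_measurable ?P"
    by (rule step_map_meas[OF sn]) simp_all
  have [measurable]: "phi \<nu> \<in> borel_measurable borel" by (rule phi_meas[OF sn pn])
  have "phi \<nu> s = (\<integral>x. iexp (s * x powr \<alpha>) \<partial>\<nu>)" by (rule phi_eq[OF sn])
  also have "\<dots> = (\<integral>x. iexp (s * x powr \<alpha>) \<partial>distr ?P borel (step_map \<alpha>))"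
    by (simp only: eq)
  also have "\<dots> = (\<integral>p. iexp (s * step_map \<alpha> p powr \<alpha>) \<partial>?P)"
    by (rule integral_distr[OF ms]) simp
  also have "\<dots> = (\<integral>p. iexp (s * fst (snd p) powr \<alpha> * snd (snd p)) * iexp (s * fst (snd p) powr \<alpha> * fst p powr \<alpha>) \<partial>?P)"
  proof (rule integral_cong_AE)
    show "(\<lambda>p. iexp (s * step_map \<alpha> p powr \<alpha>)) \<in> borel_measurable ?P" using ms by measurable
    show "(\<lambda>p. iexp (s * fst (snd p) powr \<alpha> * snd (snd p)) * iexp (s * fst (snd p) powr \<alpha> * fst p powr \<alpha>)) \<in> borel_measurable ?P"
      by measurable
    have AT: "AE t in ThetaD. 0 < t"
      unfolding ThetaD_def by (subst AE_density) (auto simp: indicator_def)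
    have AEq: "AE q in ThetaD \<Otimes>\<^sub>M Exp1. 0 < fst q \<and> 0 < snd q"
    proof (rule TEp.AE_pair_measure)
      show "{q \<in> space (ThetaD \<Otimes>\<^sub>M Exp1). 0 < fst q \<and> 0 < snd q} \<in> sets (ThetaD \<Otimes>\<^sub>M Exp1)"
        by measurable
      show "AE x in ThetaD. AE y in Exp1. 0 < fst (x, y) \<and> 0 < snd (x, y)"
        using AT by (rule eventually_mono) (use AE_Exp1_pos in \<open>auto elim!: eventually_mono\<close>)
    qed
    have "AE p in ?P. 0 < fst (snd p) \<and> 0 < snd (snd p)"
    proof (rule NTE.AE_pair_measure)
      show "{p \<in> space ?P. 0 < fst (snd p) \<and> 0 < snd (snd p)} \<in> sets ?P"
        by measurable
      show "AE x in \<nu>. AE y in ThetaD \<Otimes>\<^sub>M Exp1. 0 < fst (snd (x, y)) \<and> 0 < snd (snd (x, y))"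
        by (rule AE_I2) (use AEq in simp)
    qed
    then show "AE p in ?P. iexp (s * step_map \<alpha> p powr \<alpha>) = iexp (s * fst (snd p) powr \<alpha> * snd (snd p)) * iexp (s * fst (snd p) powr \<alpha> * fst p powr \<alpha>)"
    proof (rule eventually_mono)
      fix p :: "real \<times> real \<times> real" assume "0 < fst (snd p) \<and> 0 < snd (snd p)"
      moreover obtain x t e where p: "p = (x, t, e)" by (cases p) auto
      ultimately have e: "0 < e" "0 < t" by simp_all
      have "0 \<le> e + x powr \<alpha>" using e by (simp add: add_nonneg_nonneg)
      then show "iexp (s * step_map \<alpha> p powr \<alpha>) = iexp (s * fst (snd p) powr \<alpha> * snd (snd p)) * iexp (s * fst (snd p) powr \<alpha> * fst p powr \<alpha>)"
        unfolding p using e by (simp only: iexp_split fst_conv snd_conv less_imp_le)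
    qed
  qed
  also have "\<dots> = (\<integral>q. (\<integral>x. iexp (s * fst q powr \<alpha> * snd q) * iexp (s * fst q powr \<alpha> * x powr \<alpha>) \<partial>\<nu>) \<partial>(ThetaD \<Otimes>\<^sub>M Exp1))"
  proof -
    define F where "F x q = iexp (s * fst q powr \<alpha> * snd q) * iexp (s * fst q powr \<alpha> * x powr \<alpha>)"
      for x :: real and q :: "real \<times> real"
    have cp: "case_prod F = (\<lambda>p. iexp (s * fst (snd p) powr \<alpha> * snd (snd p)) * iexp (s * fst (snd p) powr \<alpha> * fst p powr \<alpha>))"
      by (auto simp: fun_eq_iff F_def)
    have "integrable ?P (case_prod F)"
      unfolding cp by (rule finite_measure.integrable_const_bound[OF PPfin, where B=1]) (auto simp: norm_mult)
    from NTE.integral_snd[OF this] show ?thesis unfolding cp by (simp add: F_def)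
  qed
  also have "\<dots> = (\<integral>q. iexp (s * fst q powr \<alpha> * snd q) * phi \<nu> (s * fst q powr \<alpha>) \<partial>(ThetaD \<Otimes>\<^sub>M Exp1))"
    by (rule Bochner_Integration.integral_cong[OF refl]) (simp add: phi_eq[OF sn] integral_mult_right_zero)
  also have "\<dots> = (\<integral>t. (\<integral>e. iexp (s * t powr \<alpha> * e) * phi \<nu> (s * t powr \<alpha>) \<partial>Exp1) \<partial>ThetaD)"
  proof -
    define F where "F q = iexp (s * fst q powr \<alpha> * snd q) * phi \<nu> (s * fst q powr \<alpha>)" for q :: "real \<times> real"
    have "integrable (ThetaD \<Otimes>\<^sub>M Exp1) F"
      unfolding F_def by (rule finite_measure.integrable_const_bound[OF TEfin, where B=1]) (auto simp: norm_mult phi_bound[OF sn pn])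
    from TEp.integral_fst'[OF this] show ?thesis unfolding F_def fst_conv snd_conv by (rule sym)
  qed
  also have "\<dots> = (\<integral>t. char Exp1 (s * t powr \<alpha>) * phi \<nu> (s * t powr \<alpha>) \<partial>ThetaD)"
    by (rule Bochner_Integration.integral_cong[OF refl]) (simp add: char_def integral_mult_left_zero)
  finally show ?thesis .
qed

end

context L begin

lemma AE_ThetaD: "AE t in ThetaD. 0 < t \<and> t < 1"
  unfolding ThetaD_def by (subst AE_density) (auto simp: indicator_def)

lemma phi_unique:
  assumes st1: "stationary_dist \<alpha> ThetaD \<nu>1" and st2: "stationary_dist \<alpha> ThetaD \<nu>2"
  shows "phi \<nu>1 s = phi \<nu>2 s"
proof -
  have sn1: "sets \<nu>1 = sets borel" and pn1: "prob_space \<nu>1"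
    and sn2: "sets \<nu>2 = sets borel" and pn2: "prob_space \<nu>2"
    using st1 st2 by (auto simp: stationary_dist_def)
  interpret T: prob_space ThetaD by (rule ThetaD_prob)
  define D where "D u = phi \<nu>1 u - phi \<nu>2 u" for u
  have [measurable]: "phi \<nu>1 \<in> borel_measurable borel" "phi \<nu>2 \<in> borel_measurable borel"
    using phi_meas[OF sn1 pn1] phi_meas[OF sn2 pn2] .
  have Dm[measurable]: "D \<in> borel_measurable borel" unfolding D_def by measurable
  have Dc: "isCont D u" for u unfolding D_def using phi_cont[OF sn1 pn1] phi_cont[OF sn2 pn2] by simp
  then have Dcon: "continuous_on A D" for A by (simp add: continuous_at_imp_continuous_on)
  have D0: "D 0 = 0" unfolding D_def by (simp add: phi_zero[OF sn1 pn1] phi_zero[OF sn2 pn2])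
  have int1: "integrable ThetaD (\<lambda>t. char Exp1 (u * t powr \<alpha>) * phi \<nu> (u * t powr \<alpha>))"
    if "sets \<nu> = sets borel" "prob_space \<nu>" for u \<nu>
    using that by (intro T.integrable_const_bound[where B=1]) (auto simp: norm_mult intro!: mult_le_one char_Exp1_bound phi_bound)
  have Dle: "norm (D u) \<le> (\<integral>t. norm (D (u * t powr \<alpha>)) \<partial>ThetaD)" for u
  proof -
    have "D u = (\<integral>t. char Exp1 (u * t powr \<alpha>) * D (u * t powr \<alpha>) \<partial>ThetaD)"
      unfolding D_def char_eq[OF st1, of u] char_eq[OF st2, of u]
      by (subst Bochner_Integration.integral_diff[symmetric]) (auto simp: int1 sn1 pn1 sn2 pn2 algebra_simps)
    also have "norm \<dots> \<le> (\<integral>t. norm (char Exp1 (u * t powr \<alpha>) * D (u * t powr \<alpha>)) \<partial>ThetaD)"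
      by (rule integral_norm_bound)
    also have "\<dots> \<le> (\<integral>t. norm (D (u * t powr \<alpha>)) \<partial>ThetaD)"
    proof (rule integral_mono)
      have Db: "norm (D v) \<le> 2" for v
        unfolding D_def using norm_triangle_ineq4[of "phi \<nu>1 v" "phi \<nu>2 v"]
          phi_bound[OF sn1 pn1, of v] phi_bound[OF sn2 pn2, of v] by simp
      have iD: "integrable ThetaD (\<lambda>t. D (u * t powr \<alpha>))"
        by (rule T.integrable_const_bound[where B=2]) (auto simp: Db)
      then show "integrable ThetaD (\<lambda>t. norm (D (u * t powr \<alpha>)))" by (rule integrable_norm)
      have "norm (char Exp1 (u * t powr \<alpha>) * D (u * t powr \<alpha>)) \<le> 2" for t
        using char_Exp1_bound[of "u * t powr \<alpha>"] Db[of "u * t powr \<alpha>"]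
      proof -
        have "norm (char Exp1 (u * t powr \<alpha>)) * norm (D (u * t powr \<alpha>)) \<le> 1 * 2"
          using char_Exp1_bound[of "u * t powr \<alpha>"] Db[of "u * t powr \<alpha>"] by (intro mult_mono) auto
        then show ?thesis by (simp add: norm_mult)
      qed
      then have "integrable ThetaD (\<lambda>t. char Exp1 (u * t powr \<alpha>) * D (u * t powr \<alpha>))"
        by (intro T.integrable_const_bound[where B=2]) auto
      then show "integrable ThetaD (\<lambda>t. norm (char Exp1 (u * t powr \<alpha>) * D (u * t powr \<alpha>)))"
        by (rule integrable_norm)
      fix t show "norm (char Exp1 (u * t powr \<alpha>) * D (u * t powr \<alpha>)) \<le> norm (D (u * t powr \<alpha>))"
        using char_Exp1_bound[of "u * t powr \<alpha>"] by (simp add: norm_mult mult_left_le_one_le)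
    qed
    finally show ?thesis .
  qed
  have zeroS: "D u = 0" if "\<bar>u\<bar> \<le> S" for u S
  proof -
    define C where "C = {-S..S}"
    have C: "compact C" "C \<noteq> {}" using that by (auto simp: C_def)
    obtain x0 where x0: "x0 \<in> C" "\<And>y. y \<in> C \<Longrightarrow> norm (D y) \<le> norm (D x0)"
      using continuous_attains_sup[OF C continuous_on_norm[OF Dcon]] by blast
    define M0 where "M0 = norm (D x0)"
    define Z where "Z = C \<inter> {s. norm (D s) = M0}"
    have "closed {s. norm (D s) = M0}"
      by (rule closed_Collect_eq) (auto intro!: continuous_on_norm Dcon)
    then have cZ: "compact Z" unfolding Z_def using C by (intro compact_Int_closed) auto
    have nZ: "Z \<noteq> {}" using x0 by (auto simp: Z_def M0_def)
    obtain s0 where s0: "s0 \<in> Z" "\<And>y. y \<in> Z \<Longrightarrow> \<bar>s0\<bar> \<le> \<bar>y\<bar>"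
    proof -
      have "continuous_on Z (\<lambda>y::real. \<bar>y\<bar>)" by (intro continuous_intros)
      from continuous_attains_inf[OF cZ nZ this] show ?thesis using that by blast
    qed
    have M0: "M0 = 0"
    proof (rule ccontr)
      assume "M0 \<noteq> 0"
      then have M0p: "0 < M0" by (simp add: M0_def)
      have s0ne: "s0 \<noteq> 0" using s0(1) D0 M0p by (auto simp: Z_def)
      have lt: "norm (D (s0 * t powr \<alpha>)) < M0" if t: "0 < t" "t < 1" for t
      proof -
        have tp: "t powr \<alpha> < 1" "0 < t powr \<alpha>" using t alpha by (auto simp: powr01_less_one)
        have ab: "\<bar>s0 * t powr \<alpha>\<bar> < \<bar>s0\<bar>" using tp s0ne by (simp add: abs_mult)
        have inC: "s0 * t powr \<alpha> \<in> C"
          using s0(1) ab unfolding Z_def C_def by auto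
        have "s0 * t powr \<alpha> \<notin> Z" using s0(2)[of "s0 * t powr \<alpha>"] ab by auto
        then have "norm (D (s0 * t powr \<alpha>)) \<noteq> M0" using inC by (auto simp: Z_def)
        moreover have "norm (D (s0 * t powr \<alpha>)) \<le> M0" using x0(2)[OF inC] by (simp add: M0_def)
        ultimately show ?thesis by simp
      qed
      have "M0 = norm (D s0)" using s0(1) by (simp add: Z_def)
      also have "\<dots> \<le> (\<integral>t. norm (D (s0 * t powr \<alpha>)) \<partial>ThetaD)" by (rule Dle)
      also have "\<dots> < (\<integral>t. M0 \<partial>ThetaD)"
      proof (rule T.integral_less_AE_space)
        have "AE t in ThetaD. norm (norm (D (s0 * t powr \<alpha>))) \<le> M0"
          using AE_ThetaD by (rule eventually_mono) (simp add: lt less_imp_le)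
        then show "integrable ThetaD (\<lambda>t. norm (D (s0 * t powr \<alpha>)))"
          by (rule T.integrable_const_bound) simp
        show "AE t in ThetaD. norm (D (s0 * t powr \<alpha>)) < M0"
          using AE_ThetaD by (rule eventually_mono) (auto intro: lt)
      qed (auto simp: T.emeasure_space_1)
      also have "\<dots> = M0" by (simp add: T.prob_space)
      finally show False by simp
    qed
    have "u \<in> C" using that by (auto simp: C_def)
    then have "norm (D u) \<le> M0" using x0(2) by (simp add: M0_def)
    then show ?thesis using M0 by simp
  qed
  show ?thesis using zeroS[of s "\<bar>s\<bar>"] by (simp add: D_def)
qed

lemma stat_unique:
  assumes st1: "stationary_dist \<alpha> ThetaD \<nu>1" and st2: "stationary_dist \<alpha> ThetaD \<nu>2"
  shows "\<nu>1 = \<nu>2"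
proof -
  have backeq: "distr (distr \<nu> borel (\<lambda>x. x powr \<alpha>)) borel (\<lambda>y. y powr (1 / \<alpha>)) = \<nu>"
    if st: "stationary_dist \<alpha> ThetaD \<nu>" for \<nu>
  proof -
    have sn: "sets \<nu> = sets borel" and pn: "prob_space \<nu>" and one: "emeasure \<nu> {0<..} = 1"
      using st by (auto simp: stationary_dist_def)
    interpret N: prob_space \<nu> by (rule pn)
    have m1: "(\<lambda>x. x powr \<alpha>) \<in> borel_measurable \<nu>" by (simp add: measurable_cong_sets[OF sn refl])
    have AEp: "AE x in \<nu>. x \<in> {0<..}"
      by (rule N.AE_prob_1) (simp add: one measure_def)
    have "distr (distr \<nu> borel (\<lambda>x. x powr \<alpha>)) borel (\<lambda>y. y powr (1 / \<alpha>)) = distr \<nu> borel (\<lambda>x. (x powr \<alpha>) powr (1 / \<alpha>))"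
      using m1 by (subst distr_distr) (auto simp: comp_def)
    also have "\<dots> = distr \<nu> borel (\<lambda>x. x)"
      by (rule distr_cong_AE[OF refl refl]) (use AEp alpha m1 in \<open>auto elim!: eventually_mono simp: powr_powr measurable_cong_sets[OF sn refl]\<close>)
    also have "\<dots> = distr \<nu> \<nu> (\<lambda>x. x)" by (rule distr_cong) (auto simp: sn)
    also have "\<dots> = \<nu>" by (rule distr_id)
    finally show ?thesis .
  qed
  have sn1: "sets \<nu>1 = sets borel" and pn1: "prob_space \<nu>1"
    and sn2: "sets \<nu>2 = sets borel" and pn2: "prob_space \<nu>2"
    using st1 st2 by (auto simp: stationary_dist_def)
  have "distr \<nu>1 borel (\<lambda>x. x powr \<alpha>) = distr \<nu>2 borel (\<lambda>x. x powr \<alpha>)"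
    using real_dist_pow[OF sn1 pn1] real_dist_pow[OF sn2 pn2]
    by (rule Levy_uniqueness) (use phi_unique[OF st1 st2] in \<open>auto simp: phi_def fun_eq_iff\<close>)
  then show ?thesis using backeq[OF st1] backeq[OF st2] by metis
qed

end


theorem lemma3p4:
  fixes M :: "'a measure" and \<alpha> :: real and h :: "real \<Rightarrow> real"
    and eps theta :: "nat \<Rightarrow> 'a \<Rightarrow> real"
  assumes M: "prob_space M"
    and alpha: "\<alpha> > 0"
    and h_meas: "h \<in> borel_measurable borel"
    and h_nonneg: "\<And>r. 0 < r \<Longrightarrow> r < 1 \<Longrightarrow> h r \<ge> 0"
    and h_norm: "(\<integral>\<^sup>+ r. ennreal (indicator {0<..<1} r * h r * r) \<partial>lborel) = 1"
    and indep: "prob_space.indep_vars M (\<lambda>_. borel)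
                  (\<lambda>i. case i of Inl n \<Rightarrow> eps n | Inr n \<Rightarrow> theta n)
                  (Inl ` {1..} \<union> Inr ` {1..})"
    and eps_exp: "\<And>n. n \<ge> 1 \<Longrightarrow>
                    distributed M lborel (eps n) (\<lambda>x. ennreal (exponential_density 1 x))"
    and theta_range: "\<And>n. n \<ge> 1 \<Longrightarrow> AE x in M. 0 < theta n x \<and> theta n x < 1"
    and theta_cdf: "\<And>n r. n \<ge> 1 \<Longrightarrow> 0 < r \<Longrightarrow> r < 1 \<Longrightarrow>
                    ennreal (measure M {x \<in> space M. theta n x \<le> r})
                      = (\<integral>\<^sup>+ z. ennreal (indicator {0<..r} z * h z * z) \<partial>lborel)"
  defines "\<mu> \<equiv> distr M borel (Xinf \<alpha> eps theta)"
    and "Theta \<equiv> distr M borel (theta 1)"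
  shows "(AE x in M. summable (Xterm \<alpha> eps theta x))
    \<and> distr (\<mu> \<Otimes>\<^sub>M (Theta \<Otimes>\<^sub>M Exp1)) borel (step_map \<alpha>) = \<mu>
    \<and> 0 \<le> (\<integral>x. theta 1 x powr \<alpha> \<partial>M) \<and> (\<integral>x. theta 1 x powr \<alpha> \<partial>M) < 1
    \<and> integrable M (\<lambda>x. Xinf \<alpha> eps theta x powr \<alpha>)
    \<and> (\<integral>x. Xinf \<alpha> eps theta x powr \<alpha> \<partial>M)
        = (\<integral>x. theta 1 x powr \<alpha> \<partial>M) / (1 - (\<integral>x. theta 1 x powr \<alpha> \<partial>M))
    \<and> (\<exists>f. f \<in> borel_measurable borel \<and> (\<forall>x. f x \<ge> 0)
          \<and> \<mu> = density lborel (\<lambda>x. ennreal (indicator {0<..} x * x * f x))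
          \<and> (AE x in lborel. 0 < x \<longrightarrow> 0 < f x))
    \<and> stationary_dist \<alpha> Theta \<mu>
    \<and> (\<forall>\<nu>. stationary_dist \<alpha> Theta \<nu> \<longrightarrow> \<nu> = \<mu>)"
  proof -
  interpret L: L M \<alpha> h eps theta
    by (intro L.intro L_axioms.intro) (fact assms)+
  have mu: "\<mu> = distr M borel (Xinf \<alpha> eps theta)" and Th: "Theta = L.ThetaD"
    using assms(10,11) L.Theta_eq by auto
  have stat: "stationary_dist \<alpha> Theta \<mu>" unfolding mu Th by (rule L.stationary_mu)
  show ?thesis
    unfolding mu Th
    using L.AE_summable L.stationary_mu L.m_nonneg L.m_less1 L.int_Xinf_pow L.integral_Xinf_pow
      L.density_mu L.stat_unique[OF _ L.stationary_mu]
    by (simp add: L.m_def stationary_dist_def)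
qed

end
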